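(* Let $M^n\subset\mathbb{R}^{n+1}$ be a hypersurface such that for every $x\in M$ there is an orthonormal basis $\{e_1,\dots,e_n\}$ of $T_xM$ consisting of principal vectors of $M$ at $x$ with $$\sum_{j=1}^n \nabla_jh_{jj}\,\nabla_jH\le\frac{n+1}{2n}|\nabla H|^2 .$$ Then, wherever $|\mathring A|\neq0$, $$|\nabla\mathring A|^2\ge\Big(1+\frac1n\Big)|\nabla|\mathring A||^2 .$$
   Context: For a hypersurface with unit normal $\nu$: $D$ is the Euclidean connection, $h(X,Y)=\langle D_XY,\nu\rangle$, $AX=-D_X\nu$, $H=\operatorname{tr}A$, and $\mathring A=A-\frac Hn I$ is the traceless part of $A$ (with associated bilinear form $\mathring h=h-\frac Hn g$). $\nabla$ is the Levi-Civita connection of the induced metric $g$; $\nabla_jh_{jj}=(\nabla_{e_j}h)(e_j,e_j)$, $\nabla_jH=e_j(H)$. Principal vectors are eigenvectors of $A$. *)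

theory Defs
  imports "HOL-Analysis.Analysis"
begin

text \<open>Local model of a hypersurface: a smooth immersion X of an open set U of R^n
 (coordinates indexed by the finite type 'n, n = CARD('n)) into R^(n+1)
 (indexed by 'm with CARD('m) = n+1), together with a smooth unit normal field nu.
 Tangent vectors at x are written in the coordinate frame: v :: real^'n stands for
 sum_i v_i (d_i X)(x).\<close>

definition pd :: "'n::finite \<Rightarrow> (real^'n \<Rightarrow> 'b::real_normed_vector) \<Rightarrow> real^'n \<Rightarrow> 'b" where
  "pd i f x = frechet_derivative f (at x) (axis i 1)"

fun Ck :: "nat \<Rightarrow> (real^'n::finite) set \<Rightarrow> (real^'n \<Rightarrow> 'b::real_normed_vector) \<Rightarrow> bool" where
  "Ck 0 U f = continuous_on U f"
| "Ck (Suc k) U f = (f differentiable_on U \<and> (\<forall>i. Ck k U (pd i f)))"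

definition smooth_on :: "(real^'n::finite) set \<Rightarrow> (real^'n \<Rightarrow> 'b::real_normed_vector) \<Rightarrow> bool" where
  "smooth_on U f = (\<forall>k. Ck k U f)"

definition hypersurface_patch ::
  "(real^'n::finite) set \<Rightarrow> (real^'n \<Rightarrow> real^'m::finite) \<Rightarrow> (real^'n \<Rightarrow> real^'m) \<Rightarrow> bool" where
  "hypersurface_patch U X \<nu> \<longleftrightarrow> open U \<and> CARD('m) = CARD('n) + 1 \<and>
     smooth_on U X \<and> smooth_on U \<nu> \<and>
     (\<forall>x\<in>U. X differentiable (at x) \<and> inj (frechet_derivative X (at x))) \<and>
     (\<forall>x\<in>U. norm (\<nu> x) = 1 \<and> (\<forall>i. \<nu> x \<bullet> pd i X x = 0))"

definition gm :: "(real^'n::finite \<Rightarrow> real^'m::finite) \<Rightarrow> real^'n \<Rightarrow> real^'n^'n" where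
  "gm X x = (\<chi> i j. pd i X x \<bullet> pd j X x)"

definition ginv :: "(real^'n::finite \<Rightarrow> real^'m::finite) \<Rightarrow> real^'n \<Rightarrow> real^'n^'n" where
  "ginv X x = matrix_inv (gm X x)"

definition hh :: "(real^'n::finite \<Rightarrow> real^'m::finite) \<Rightarrow> (real^'n \<Rightarrow> real^'m) \<Rightarrow> real^'n \<Rightarrow> real^'n^'n" where
  "hh X \<nu> x = (\<chi> i j. pd i (pd j X) x \<bullet> \<nu> x)"

text \<open>Shape operator A (A X = - D_X nu) as the matrix (A $ j $ i) = A^j_i:
  - d_i nu = sum_j A^j_i d_j X, the tangential components being computed with g^{-1}.\<close>
definition shapeA :: "(real^'n::finite \<Rightarrow> real^'m::finite) \<Rightarrow> (real^'n \<Rightarrow> real^'m) \<Rightarrow> real^'n \<Rightarrow> real^'n^'n" where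
  "shapeA X \<nu> x = (\<chi> j i. - (\<Sum>k\<in>UNIV. ginv X x $ j $ k * (pd i \<nu> x \<bullet> pd k X x)))"

definition meanH :: "(real^'n::finite \<Rightarrow> real^'m::finite) \<Rightarrow> (real^'n \<Rightarrow> real^'m) \<Rightarrow> real^'n \<Rightarrow> real" where
  "meanH X \<nu> x = (\<Sum>i\<in>UNIV. shapeA X \<nu> x $ i $ i)"

definition hcirc :: "(real^'n::finite \<Rightarrow> real^'m::finite) \<Rightarrow> (real^'n \<Rightarrow> real^'m) \<Rightarrow> real^'n \<Rightarrow> real^'n^'n" where
  "hcirc X \<nu> x = (\<chi> i j. hh X \<nu> x $ i $ j - (meanH X \<nu> x / real CARD('n)) * gm X x $ i $ j)"

definition christ :: "(real^'n::finite \<Rightarrow> real^'m::finite) \<Rightarrow> real^'n \<Rightarrow> 'n \<Rightarrow> 'n \<Rightarrow> 'n \<Rightarrow> real" where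
  "christ X x l i j = (1/2) * (\<Sum>m\<in>UNIV. ginv X x $ l $ m *
      (pd i (\<lambda>y. gm X y $ j $ m) x + pd j (\<lambda>y. gm X y $ i $ m) x - pd m (\<lambda>y. gm X y $ i $ j) x))"

definition cov2 :: "(real^'n::finite \<Rightarrow> real^'m::finite) \<Rightarrow> (real^'n \<Rightarrow> real^'n^'n) \<Rightarrow> real^'n \<Rightarrow> 'n \<Rightarrow> 'n \<Rightarrow> 'n \<Rightarrow> real" where
  "cov2 X T x k i j = pd k (\<lambda>y. T y $ i $ j) x
      - (\<Sum>l\<in>UNIV. christ X x l k i * T x $ l $ j)
      - (\<Sum>l\<in>UNIV. christ X x l k j * T x $ i $ l)"

definition tnorm2 :: "(real^'n::finite \<Rightarrow> real^'m::finite) \<Rightarrow> real^'n \<Rightarrow> real^'n^'n \<Rightarrow> real" where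
  "tnorm2 X x T = (\<Sum>i\<in>UNIV. \<Sum>i'\<in>UNIV. \<Sum>j\<in>UNIV. \<Sum>j'\<in>UNIV.
      ginv X x $ i $ i' * ginv X x $ j $ j' * T $ i $ j * T $ i' $ j')"

definition t3norm2 :: "(real^'n::finite \<Rightarrow> real^'m::finite) \<Rightarrow> real^'n \<Rightarrow> ('n \<Rightarrow> 'n \<Rightarrow> 'n \<Rightarrow> real) \<Rightarrow> real" where
  "t3norm2 X x S = (\<Sum>k\<in>UNIV. \<Sum>k'\<in>UNIV. \<Sum>i\<in>UNIV. \<Sum>i'\<in>UNIV. \<Sum>j\<in>UNIV. \<Sum>j'\<in>UNIV.
      ginv X x $ k $ k' * ginv X x $ i $ i' * ginv X x $ j $ j' * S k i j * S k' i' j')"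

definition gradnorm2 :: "(real^'n::finite \<Rightarrow> real^'m::finite) \<Rightarrow> (real^'n \<Rightarrow> real) \<Rightarrow> real^'n \<Rightarrow> real" where
  "gradnorm2 X f x = (\<Sum>i\<in>UNIV. \<Sum>j\<in>UNIV. ginv X x $ i $ j * pd i f x * pd j f x)"

definition normAcirc :: "(real^'n::finite \<Rightarrow> real^'m::finite) \<Rightarrow> (real^'n \<Rightarrow> real^'m) \<Rightarrow> real^'n \<Rightarrow> real" where
  "normAcirc X \<nu> x = sqrt (tnorm2 X x (hcirc X \<nu> x))"

text \<open>g-orthonormal family of CARD('n) tangent vectors (hence an orthonormal basis of T_xM).\<close>
definition g_orthonormal :: "(real^'n::finite \<Rightarrow> real^'m::finite) \<Rightarrow> real^'n \<Rightarrow> ('n \<Rightarrow> real^'n) \<Rightarrow> bool" where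
  "g_orthonormal X x e \<longleftrightarrow> (\<forall>a b. (e a) \<bullet> (gm X x *v e b) = (if a = b then 1 else 0))"

definition principal_vector :: "(real^'n::finite \<Rightarrow> real^'m::finite) \<Rightarrow> (real^'n \<Rightarrow> real^'m) \<Rightarrow> real^'n \<Rightarrow> real^'n \<Rightarrow> bool" where
  "principal_vector X \<nu> x v \<longleftrightarrow> v \<noteq> 0 \<and> (\<exists>c::real. shapeA X \<nu> x *v v = c *\<^sub>R v)"

definition nabla_h_eee :: "(real^'n::finite \<Rightarrow> real^'m::finite) \<Rightarrow> (real^'n \<Rightarrow> real^'m) \<Rightarrow> real^'n \<Rightarrow> real^'n \<Rightarrow> real" where
  "nabla_h_eee X \<nu> x e = (\<Sum>k\<in>UNIV. \<Sum>i\<in>UNIV. \<Sum>j\<in>UNIV. e $ k * e $ i * e $ j * cov2 X (hh X \<nu>) x k i j)"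

definition dir_deriv :: "real^'n::finite \<Rightarrow> (real^'n \<Rightarrow> real) \<Rightarrow> real^'n \<Rightarrow> real" where
  "dir_deriv e f x = (\<Sum>k\<in>UNIV. e $ k * pd k f x)"

end

theory Submission
  imports Defs "HOL-Analysis.Analysis"
begin


lemma alg_id:
  fixes n q y s :: real assumes "n > 0"
  shows "((q\<^sup>2 + y) - (q + s)\<^sup>2 / n) + 2 * y - ((1 + 1/n) * ((q\<^sup>2 + y) - (q + s)\<^sup>2 / n)
     + 2 / n * ((n + 1) / (2 * n) * (q + s)\<^sup>2 - q * (q + s))) = (2 - 1/n) * y - s\<^sup>2 / n"
  using assms by (simp add: field_simps power2_eq_square)

lemma sum_lin: fixes p q r :: real shows "(\<Sum>a\<in>A. p * f a + q * (r * g a - h a)) = p * (\<Sum>a\<in>A. f a) + q * (r * (\<Sum>a\<in>A. g a) - (\<Sum>a\<in>A. h a))"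
  by (simp add: sum.distrib sum_subtractf flip: sum_distrib_left)

lemma core_ineq:
  fixes S :: "'n::finite \<Rightarrow> 'n \<Rightarrow> 'n \<Rightarrow> real" and \<mu> K :: "'n \<Rightarrow> real"
  defines "n \<equiv> real CARD('n)"
  assumes s1: "\<And>a b c. S a b c = S b a c" and s2: "\<And>a b c. S a b c = S a c b"
    and K: "\<And>a. K a = (\<Sum>b\<in>UNIV. S a b b)"
    and mu0: "(\<Sum>b\<in>UNIV. \<mu> b) = 0" and mupos: "(\<Sum>b\<in>UNIV. (\<mu> b)\<^sup>2) > 0"
    and hyp: "(\<Sum>a\<in>UNIV. S a a a * K a) \<le> (n + 1) / (2 * n) * (\<Sum>a\<in>UNIV. (K a)\<^sup>2)"
  shows "(1 + 1 / n) * ((\<Sum>a\<in>UNIV. (\<Sum>b\<in>UNIV. (S a b b - K a / n) * \<mu> b)\<^sup>2) / (\<Sum>b\<in>UNIV. (\<mu> b)\<^sup>2))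
     \<le> (\<Sum>a\<in>UNIV. \<Sum>b\<in>UNIV. \<Sum>c\<in>UNIV. (S a b c - (if b = c then K a / n else 0))\<^sup>2)"
proof -
  define x where "x a b = S a b b" for a b
  define M where "M = (\<Sum>b\<in>UNIV. (\<mu> b)\<^sup>2)"
  have npos: "n > 0" unfolding n_def by simp
  have n1: "n \<ge> 1" unfolding n_def by (simp add: Suc_le_eq)
  have cs: "(\<Sum>b\<in>UNIV. (S a b b - K a / n) * \<mu> b)\<^sup>2 \<le> M * ((\<Sum>b\<in>UNIV. (x a b)\<^sup>2) - (K a)\<^sup>2 / n)" for a
  proof -
    have "(\<Sum>b\<in>UNIV. (S a b b - K a / n) * \<mu> b)\<^sup>2 \<le> (\<Sum>b\<in>UNIV. (S a b b - K a / n)\<^sup>2) * M"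
      unfolding M_def by (rule Cauchy_Schwarz_ineq_sum)
    also have "(\<Sum>b\<in>UNIV. (S a b b - K a / n)\<^sup>2) = (\<Sum>b\<in>UNIV. (x a b)\<^sup>2) - (K a)\<^sup>2 / n"
    proof -
      have "(\<Sum>b\<in>UNIV. (S a b b - K a / n)\<^sup>2) = (\<Sum>b\<in>UNIV. (x a b)\<^sup>2 - 2 * (K a / n) * x a b + (K a / n)\<^sup>2)"
        by (rule sum.cong) (auto simp: x_def power2_eq_square algebra_simps)
      also have "\<dots> = (\<Sum>b\<in>UNIV. (x a b)\<^sup>2) - 2 * (K a / n) * K a + n * (K a / n)\<^sup>2"
      proof -
        have "(\<Sum>b\<in>UNIV. 2 * (K a / n) * x a b) = 2 * (K a / n) * K a"
          by (subst sum_distrib_left[symmetric]) (simp add: K x_def)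
        then show ?thesis by (simp add: sum.distrib sum_subtractf n_def)
      qed
      also have "\<dots> = (\<Sum>b\<in>UNIV. (x a b)\<^sup>2) - (K a)\<^sup>2 / n"
        using npos by (simp add: field_simps power2_eq_square)
      finally show ?thesis .
    qed
    finally show ?thesis by (simp add: mult.commute)
  qed
  have L1: "(\<Sum>a\<in>UNIV. (\<Sum>b\<in>UNIV. (S a b b - K a / n) * \<mu> b)\<^sup>2) / M
      \<le> (\<Sum>a\<in>UNIV. (\<Sum>b\<in>UNIV. (x a b)\<^sup>2) - (K a)\<^sup>2 / n)"
  proof -
    have Mpos: "M > 0" using mupos M_def by simp
    have "(\<Sum>a\<in>UNIV. (\<Sum>b\<in>UNIV. (S a b b - K a / n) * \<mu> b)\<^sup>2) \<le> (\<Sum>a\<in>UNIV. M * ((\<Sum>b\<in>UNIV. (x a b)\<^sup>2) - (K a)\<^sup>2 / n))"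
      by (rule sum_mono) (rule cs)
    then show ?thesis using Mpos by (simp add: divide_le_eq sum_distrib_left[symmetric] mult.commute)
  qed
  define f where "f a b c = S a b c - (if b = c then K a / n else 0)" for a b c
  have pt: "(f a b c)\<^sup>2 \<ge> (if b = c then (f a b c)\<^sup>2 else 0) + (if b \<noteq> c \<and> a = b then (x c a)\<^sup>2 else 0)
      + (if b \<noteq> c \<and> a = c then (x b a)\<^sup>2 else 0)" for a b c
  proof -
    have e1: "S a a c = S c a a" for a c by (metis s1 s2)
    have e2: "S a b a = S b a a" for a b by (metis s1 s2)
    show ?thesis
    proof (cases "b = c")
      case True then show ?thesis by simp
    next
      case False
      show ?thesis
      proof (cases "a = b")
        case True
        then have "f a b c = x c a" using False e1[of b c] by (simp add: f_def x_def)
        then show ?thesis using False True by simp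
      next
        case nb: False
        show ?thesis
        proof (cases "a = c")
          case True
          then have "f a b c = x b a" using False by (simp add: f_def x_def e2)
          then show ?thesis using False True nb by simp
        qed (use False nb in simp)
      qed
    qed
  qed
  have L2: "(\<Sum>a\<in>UNIV. \<Sum>b\<in>UNIV. \<Sum>c\<in>UNIV. (f a b c)\<^sup>2) \<ge>
      (\<Sum>a\<in>UNIV. \<Sum>b\<in>UNIV. (x a b - K a / n)\<^sup>2) + 2 * (\<Sum>a\<in>UNIV. \<Sum>b\<in>UNIV. if b \<noteq> a then (x a b)\<^sup>2 else 0)"
  proof -
    have A: "(\<Sum>a\<in>UNIV. \<Sum>b\<in>UNIV. \<Sum>c\<in>UNIV. (f a b c)\<^sup>2) \<ge> (\<Sum>a\<in>UNIV. \<Sum>b\<in>UNIV. \<Sum>c\<in>UNIV.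
       (if b = c then (f a b c)\<^sup>2 else 0) + (if b \<noteq> c \<and> a = b then (x c a)\<^sup>2 else 0)
      + (if b \<noteq> c \<and> a = c then (x b a)\<^sup>2 else 0))"
      by (intro sum_mono pt)
    have B: "(\<Sum>a\<in>UNIV. \<Sum>b\<in>UNIV. \<Sum>c\<in>UNIV.
       (if b = c then (f a b c)\<^sup>2 else 0) + (if b \<noteq> c \<and> a = b then (x c a)\<^sup>2 else 0)
      + (if b \<noteq> c \<and> a = c then (x b a)\<^sup>2 else 0)) = (\<Sum>a\<in>UNIV. \<Sum>b\<in>UNIV. (x a b - K a / n)\<^sup>2) + (\<Sum>a\<in>UNIV. \<Sum>c\<in>UNIV. if c \<noteq> a then (x c a)\<^sup>2 else 0)
         + (\<Sum>a\<in>UNIV. \<Sum>b\<in>UNIV. if b \<noteq> a then (x b a)\<^sup>2 else 0)"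
    proof -
      have t1: "(\<Sum>c\<in>UNIV. if b = c then (f a b c)\<^sup>2 else 0) = (x a b - K a / n)\<^sup>2" for a b
        by (simp add: f_def x_def)
      have t2: "(\<Sum>b\<in>UNIV. \<Sum>c\<in>UNIV. if b \<noteq> c \<and> a = b then (x c a)\<^sup>2 else 0)
         = (\<Sum>c\<in>UNIV. if c \<noteq> a then (x c a)\<^sup>2 else (0::real))" for a
      proof -
        have "(\<Sum>b\<in>UNIV. \<Sum>c\<in>UNIV. if b \<noteq> c \<and> a = b then (x c a)\<^sup>2 else 0)
          = (\<Sum>b\<in>UNIV. if a = b then (\<Sum>c\<in>UNIV. if c \<noteq> a then (x c a)\<^sup>2 else 0) else (0::real))"
          by (rule sum.cong) (auto intro!: sum.cong)
        then show ?thesis by simp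
      qed
      have t3: "(\<Sum>c\<in>UNIV. if b \<noteq> c \<and> a = c then (x b a)\<^sup>2 else 0)
         = (if b \<noteq> a then (x b a)\<^sup>2 else (0::real))" for a b
      proof -
        have "(\<Sum>c\<in>UNIV. if b \<noteq> c \<and> a = c then (x b a)\<^sup>2 else 0)
          = (\<Sum>c\<in>UNIV. if a = c then (if b \<noteq> a then (x b a)\<^sup>2 else 0) else (0::real))"
          by (rule sum.cong) auto
        then show ?thesis by simp
      qed
      show ?thesis
        by (simp only: sum.distrib t1 t2 t3)
    qed
    have C1: "(\<Sum>a\<in>UNIV. \<Sum>c\<in>UNIV. if c \<noteq> a then (x c a)\<^sup>2 else 0) = (\<Sum>a\<in>UNIV. \<Sum>b\<in>UNIV. if b \<noteq> a then (x a b)\<^sup>2 else 0)"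
      by (subst sum.swap) (simp add: eq_commute)
    have C2: "(\<Sum>a\<in>UNIV. \<Sum>b\<in>UNIV. if b \<noteq> a then (x b a)\<^sup>2 else 0) = (\<Sum>a\<in>UNIV. \<Sum>b\<in>UNIV. if b \<noteq> a then (x a b)\<^sup>2 else 0)"
      by (subst sum.swap) (simp add: eq_commute)
    show ?thesis using A B C1 C2 by simp
  qed
  define y where "y a = (\<Sum>b\<in>UNIV. if b \<noteq> a then (x a b)\<^sup>2 else 0)" for a
  define s where "s a = (\<Sum>b\<in>UNIV. if b \<noteq> a then x a b else 0)" for a
  have xs: "(\<Sum>b\<in>UNIV. (x a b)\<^sup>2) = (x a a)\<^sup>2 + y a" for a
  proof -
    have "(\<Sum>b\<in>UNIV. (x a b)\<^sup>2) = (\<Sum>b\<in>UNIV. (if b = a then (x a b)\<^sup>2 else 0) + (if b \<noteq> a then (x a b)\<^sup>2 else 0))"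
      by (rule sum.cong) auto
    then show ?thesis by (simp add: sum.distrib y_def)
  qed
  have Ks: "K a = x a a + s a" for a
  proof -
    have "K a = (\<Sum>b\<in>UNIV. (if b = a then x a b else 0) + (if b \<noteq> a then x a b else 0))"
      unfolding K x_def by (rule sum.cong) auto
    then show ?thesis by (simp add: sum.distrib s_def)
  qed
  have sy: "(s a)\<^sup>2 \<le> n * y a" for a
  proof -
    have "(s a)\<^sup>2 = (\<Sum>b\<in>UNIV. (if b \<noteq> a then 1 else 0) * (if b \<noteq> a then x a b else 0))\<^sup>2"
      unfolding s_def by (simp add: if_distrib cong: if_cong)
    also have "\<dots> \<le> (\<Sum>b\<in>UNIV. (if b \<noteq> a then 1 else 0)\<^sup>2) * (\<Sum>b\<in>UNIV. (if b \<noteq> a then x a b else 0)\<^sup>2)"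
      by (rule Cauchy_Schwarz_ineq_sum)
    also have "(\<Sum>b\<in>UNIV. (if b \<noteq> a then x a b else 0)\<^sup>2) = y a"
      unfolding y_def by (rule sum.cong) auto
    also have "(\<Sum>b\<in>UNIV. (if b \<noteq> (a::'n) then 1 else 0)\<^sup>2) \<le> n"
    proof -
      have "(\<Sum>b\<in>UNIV. (if b \<noteq> (a::'n) then 1 else 0)\<^sup>2) \<le> (\<Sum>b\<in>(UNIV::'n set). (1::real))"
        by (rule sum_mono) auto
      then show ?thesis by (simp add: n_def)
    qed
    moreover have "y a \<ge> 0" unfolding y_def by (intro sum_nonneg) auto
    ultimately show ?thesis by (metis (no_types, lifting) mult.commute mult_right_mono order_trans)
  qed
  have yn: "y a \<ge> 0" for a unfolding y_def by (intro sum_nonneg) auto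
  have per: "(1 + 1/n) * ((\<Sum>b\<in>UNIV. (x a b)\<^sup>2) - (K a)\<^sup>2 / n)
     + 2 / n * ((n + 1) / (2 * n) * (K a)\<^sup>2 - x a a * K a)
     \<le> (\<Sum>b\<in>UNIV. (x a b - K a / n)\<^sup>2) + 2 * y a" for a
  proof -
    have e: "(\<Sum>b\<in>UNIV. (x a b - K a / n)\<^sup>2) = (\<Sum>b\<in>UNIV. (x a b)\<^sup>2) - (K a)\<^sup>2 / n"
    proof -
      have "(\<Sum>b\<in>UNIV. (x a b - K a / n)\<^sup>2) = (\<Sum>b\<in>UNIV. (x a b)\<^sup>2 - 2 * (K a / n) * x a b + (K a / n)\<^sup>2)"
        by (rule sum.cong) (auto simp: power2_eq_square algebra_simps)
      also have "\<dots> = (\<Sum>b\<in>UNIV. (x a b)\<^sup>2) - 2 * (K a / n) * K a + n * (K a / n)\<^sup>2"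
      proof -
        have "(\<Sum>b\<in>UNIV. 2 * (K a / n) * x a b) = 2 * (K a / n) * K a"
          by (subst sum_distrib_left[symmetric]) (simp add: K x_def)
        then show ?thesis by (simp add: sum.distrib sum_subtractf n_def)
      qed
      also have "\<dots> = (\<Sum>b\<in>UNIV. (x a b)\<^sup>2) - (K a)\<^sup>2 / n"
        using npos by (simp add: field_simps power2_eq_square)
      finally show ?thesis .
    qed
    have key: "(2 - 1/n) * y a - (s a)\<^sup>2 / n \<ge> 0"
    proof -
      have "(s a)\<^sup>2 / n \<le> y a" using sy[of a] npos by (simp add: divide_le_eq mult.commute)
      moreover have "(1 - 1/n) * y a \<ge> 0" using n1 yn[of a] by (simp add: field_simps mult_le_cancel_right1)
      ultimately show ?thesis by (simp add: algebra_simps)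
    qed
    have "(\<Sum>b\<in>UNIV. (x a b - K a / n)\<^sup>2) + 2 * y a - ((1 + 1/n) * ((\<Sum>b\<in>UNIV. (x a b)\<^sup>2) - (K a)\<^sup>2 / n)
     + 2 / n * ((n + 1) / (2 * n) * (K a)\<^sup>2 - x a a * K a)) = (2 - 1/n) * y a - (s a)\<^sup>2 / n"
      unfolding e xs using alg_id[OF npos, of "x a a" "y a" "s a"] by (simp add: Ks[symmetric])
    with key show ?thesis by linarith
  qed
  have "(1 + 1 / n) * ((\<Sum>a\<in>UNIV. (\<Sum>b\<in>UNIV. (S a b b - K a / n) * \<mu> b)\<^sup>2) / M)
      \<le> (1 + 1/n) * (\<Sum>a\<in>UNIV. (\<Sum>b\<in>UNIV. (x a b)\<^sup>2) - (K a)\<^sup>2 / n)"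
    using L1 npos by (intro mult_left_mono) auto
  also have "\<dots> \<le> (1 + 1/n) * (\<Sum>a\<in>UNIV. (\<Sum>b\<in>UNIV. (x a b)\<^sup>2) - (K a)\<^sup>2 / n)
      + 2 / n * ((n + 1) / (2 * n) * (\<Sum>a\<in>UNIV. (K a)\<^sup>2) - (\<Sum>a\<in>UNIV. S a a a * K a))"
  proof -
    have h1: "0 \<le> (n + 1) / (2 * n) * (\<Sum>a\<in>UNIV. (K a)\<^sup>2) - (\<Sum>a\<in>UNIV. S a a a * K a)" using hyp by simp
    have "0 \<le> 2 / n" using npos by simp
    then have "0 \<le> 2 / n * ((n + 1) / (2 * n) * (\<Sum>a\<in>UNIV. (K a)\<^sup>2) - (\<Sum>a\<in>UNIV. S a a a * K a))"
      using h1 by (rule mult_nonneg_nonneg)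
    then show ?thesis by linarith
  qed
  also have "\<dots> = (\<Sum>a\<in>UNIV. (1 + 1/n) * ((\<Sum>b\<in>UNIV. (x a b)\<^sup>2) - (K a)\<^sup>2 / n)
     + 2 / n * ((n + 1) / (2 * n) * (K a)\<^sup>2 - x a a * K a))"
    by (simp only: sum_lin x_def)
  also have "\<dots> \<le> (\<Sum>a\<in>UNIV. (\<Sum>b\<in>UNIV. (x a b - K a / n)\<^sup>2) + 2 * y a)"
    by (rule sum_mono) (rule per)
  also have "\<dots> \<le> (\<Sum>a\<in>UNIV. \<Sum>b\<in>UNIV. \<Sum>c\<in>UNIV. (f a b c)\<^sup>2)"
    using L2 by (simp add: sum.distrib sum_distrib_left y_def)
  finally show ?thesis unfolding M_def f_def .
qed


lemma C2p:
  fixes E g :: "'n::finite \<Rightarrow> 'n \<Rightarrow> real"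
  assumes g: "\<And>i j. g i j = (\<Sum>a\<in>UNIV. E i a * E j a)"
  shows "(\<Sum>i\<in>UNIV. \<Sum>j\<in>UNIV. g i j * (u i * v j)) = (\<Sum>a\<in>UNIV. (\<Sum>i\<in>UNIV. E i a * u i) * (\<Sum>j\<in>UNIV. E j a * v j))"
proof -
  have "(\<Sum>a\<in>UNIV. (\<Sum>i\<in>UNIV. E i a * u i) * (\<Sum>j\<in>UNIV. E j a * v j))
      = (\<Sum>a\<in>UNIV. \<Sum>i\<in>UNIV. \<Sum>j\<in>UNIV. E i a * E j a * (u i * v j))"
    by (simp add: sum_product mult_ac)
  also have "\<dots> = (\<Sum>i\<in>UNIV. \<Sum>a\<in>UNIV. \<Sum>j\<in>UNIV. E i a * E j a * (u i * v j))"
    by (rule sum.swap)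
  also have "\<dots> = (\<Sum>i\<in>UNIV. \<Sum>j\<in>UNIV. \<Sum>a\<in>UNIV. E i a * E j a * (u i * v j))"
    by (rule sum.cong[OF refl], rule sum.swap)
  also have "\<dots> = (\<Sum>i\<in>UNIV. \<Sum>j\<in>UNIV. g i j * (u i * v j))"
    by (simp add: g sum_distrib_right)
  finally show ?thesis by simp
qed

lemma C1:
  fixes E g :: "'n::finite \<Rightarrow> 'n \<Rightarrow> real"
  assumes g: "\<And>i j. g i j = (\<Sum>a\<in>UNIV. E i a * E j a)"
  shows "(\<Sum>i\<in>UNIV. \<Sum>j\<in>UNIV. g i j * P i j) = (\<Sum>a\<in>UNIV. \<Sum>i\<in>UNIV. \<Sum>j\<in>UNIV. E i a * E j a * P i j)"
proof -
  have "(\<Sum>i\<in>UNIV. \<Sum>j\<in>UNIV. g i j * P i j) = (\<Sum>i\<in>UNIV. \<Sum>j\<in>UNIV. \<Sum>a\<in>UNIV. E i a * E j a * P i j)"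
    by (simp add: g sum_distrib_right)
  also have "\<dots> = (\<Sum>i\<in>UNIV. \<Sum>a\<in>UNIV. \<Sum>j\<in>UNIV. E i a * E j a * P i j)"
    by (rule sum.cong[OF refl], rule sum.swap)
  also have "\<dots> = (\<Sum>a\<in>UNIV. \<Sum>i\<in>UNIV. \<Sum>j\<in>UNIV. E i a * E j a * P i j)"
    by (rule sum.swap)
  finally show ?thesis .
qed

definition hat2 :: "('n::finite \<Rightarrow> 'n \<Rightarrow> real) \<Rightarrow> ('n \<Rightarrow> 'n \<Rightarrow> real) \<Rightarrow> 'n \<Rightarrow> 'n \<Rightarrow> real" where
  "hat2 E P a b = (\<Sum>i\<in>UNIV. \<Sum>j\<in>UNIV. E i a * E j b * P i j)"

definition hat3 :: "('n::finite \<Rightarrow> 'n \<Rightarrow> real) \<Rightarrow> ('n \<Rightarrow> 'n \<Rightarrow> 'n \<Rightarrow> real) \<Rightarrow> 'n \<Rightarrow> 'n \<Rightarrow> 'n \<Rightarrow> real" where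
  "hat3 E S a b c = (\<Sum>k\<in>UNIV. \<Sum>i\<in>UNIV. \<Sum>j\<in>UNIV. E k a * E i b * E j c * S k i j)"

lemma C4:
  fixes E g :: "'n::finite \<Rightarrow> 'n \<Rightarrow> real"
  assumes g: "\<And>i j. g i j = (\<Sum>a\<in>UNIV. E i a * E j a)"
  shows "(\<Sum>i\<in>UNIV. \<Sum>i'\<in>UNIV. \<Sum>j\<in>UNIV. \<Sum>j'\<in>UNIV. g i i' * g j j' * P i j * Q i' j')
     = (\<Sum>a\<in>UNIV. \<Sum>b\<in>UNIV. hat2 E P a b * hat2 E Q a b)"
proof -
  define p where "p i b = (\<Sum>j\<in>UNIV. E j b * P i j)" for i b
  define q where "q i b = (\<Sum>j\<in>UNIV. E j b * Q i j)" for i b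
  have "(\<Sum>i\<in>UNIV. \<Sum>i'\<in>UNIV. \<Sum>j\<in>UNIV. \<Sum>j'\<in>UNIV. g i i' * g j j' * P i j * Q i' j')
     = (\<Sum>i\<in>UNIV. \<Sum>i'\<in>UNIV. g i i' * (\<Sum>j\<in>UNIV. \<Sum>j'\<in>UNIV. g j j' * (P i j * Q i' j')))"
    by (simp add: sum_distrib_left mult_ac)
  also have "\<dots> = (\<Sum>i\<in>UNIV. \<Sum>i'\<in>UNIV. g i i' * (\<Sum>b\<in>UNIV. p i b * q i' b))"
    by (simp add: C2p[OF g] p_def q_def)
  also have "\<dots> = (\<Sum>i\<in>UNIV. \<Sum>i'\<in>UNIV. \<Sum>b\<in>UNIV. g i i' * (p i b * q i' b))"
    by (simp add: sum_distrib_left)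
  also have "\<dots> = (\<Sum>i\<in>UNIV. \<Sum>b\<in>UNIV. \<Sum>i'\<in>UNIV. g i i' * (p i b * q i' b))"
    by (rule sum.cong[OF refl], rule sum.swap)
  also have "\<dots> = (\<Sum>b\<in>UNIV. \<Sum>i\<in>UNIV. \<Sum>i'\<in>UNIV. g i i' * (p i b * q i' b))"
    by (rule sum.swap)
  also have "\<dots> = (\<Sum>b\<in>UNIV. \<Sum>a\<in>UNIV. (\<Sum>i\<in>UNIV. E i a * p i b) * (\<Sum>i'\<in>UNIV. E i' a * q i' b))"
    by (simp add: C2p[OF g])
  also have "\<dots> = (\<Sum>a\<in>UNIV. \<Sum>b\<in>UNIV. (\<Sum>i\<in>UNIV. E i a * p i b) * (\<Sum>i'\<in>UNIV. E i' a * q i' b))"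
    by (rule sum.swap)
  also have "\<dots> = (\<Sum>a\<in>UNIV. \<Sum>b\<in>UNIV. hat2 E P a b * hat2 E Q a b)"
    by (simp add: hat2_def p_def q_def sum_distrib_left mult_ac)
  finally show ?thesis .
qed

lemma C6:
  fixes E g :: "'n::finite \<Rightarrow> 'n \<Rightarrow> real"
  assumes g: "\<And>i j. g i j = (\<Sum>a\<in>UNIV. E i a * E j a)"
  shows "(\<Sum>k\<in>UNIV. \<Sum>k'\<in>UNIV. \<Sum>i\<in>UNIV. \<Sum>i'\<in>UNIV. \<Sum>j\<in>UNIV. \<Sum>j'\<in>UNIV.
      g k k' * g i i' * g j j' * S k i j * S k' i' j')
     = (\<Sum>a\<in>UNIV. \<Sum>b\<in>UNIV. \<Sum>c\<in>UNIV. (hat3 E S a b c)\<^sup>2)"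
proof -
  define F where "F k b c = hat2 E (S k) b c" for k b c
  have "(\<Sum>k\<in>UNIV. \<Sum>k'\<in>UNIV. \<Sum>i\<in>UNIV. \<Sum>i'\<in>UNIV. \<Sum>j\<in>UNIV. \<Sum>j'\<in>UNIV.
      g k k' * g i i' * g j j' * S k i j * S k' i' j')
     = (\<Sum>k\<in>UNIV. \<Sum>k'\<in>UNIV. g k k' * (\<Sum>i\<in>UNIV. \<Sum>i'\<in>UNIV. \<Sum>j\<in>UNIV. \<Sum>j'\<in>UNIV.
      g i i' * g j j' * S k i j * S k' i' j'))"
    by (simp add: sum_distrib_left mult_ac)
  also have "\<dots> = (\<Sum>k\<in>UNIV. \<Sum>k'\<in>UNIV. g k k' * (\<Sum>b\<in>UNIV. \<Sum>c\<in>UNIV. F k b c * F k' b c))"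
    by (simp only: C4[OF g] F_def)
  also have "\<dots> = (\<Sum>k\<in>UNIV. \<Sum>k'\<in>UNIV. \<Sum>b\<in>UNIV. \<Sum>c\<in>UNIV. g k k' * (F k b c * F k' b c))"
    by (simp add: sum_distrib_left)
  also have "\<dots> = (\<Sum>b\<in>UNIV. \<Sum>c\<in>UNIV. \<Sum>k\<in>UNIV. \<Sum>k'\<in>UNIV. g k k' * (F k b c * F k' b c))"
  proof -
    let ?f = "\<lambda>k k' b c. g k k' * (F k b c * F k' b c)"
    have "(\<Sum>k\<in>UNIV. \<Sum>k'\<in>UNIV. \<Sum>b\<in>UNIV. \<Sum>c\<in>UNIV. ?f k k' b c)
       = (\<Sum>k\<in>UNIV. \<Sum>b\<in>UNIV. \<Sum>k'\<in>UNIV. \<Sum>c\<in>UNIV. ?f k k' b c)"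
      by (rule sum.cong[OF refl], rule sum.swap)
    also have "\<dots> = (\<Sum>k\<in>UNIV. \<Sum>b\<in>UNIV. \<Sum>c\<in>UNIV. \<Sum>k'\<in>UNIV. ?f k k' b c)"
      by (rule sum.cong[OF refl], rule sum.cong[OF refl], rule sum.swap)
    also have "\<dots> = (\<Sum>b\<in>UNIV. \<Sum>k\<in>UNIV. \<Sum>c\<in>UNIV. \<Sum>k'\<in>UNIV. ?f k k' b c)"
      by (rule sum.swap)
    also have "\<dots> = (\<Sum>b\<in>UNIV. \<Sum>c\<in>UNIV. \<Sum>k\<in>UNIV. \<Sum>k'\<in>UNIV. ?f k k' b c)"
      by (rule sum.cong[OF refl], rule sum.swap)
    finally show ?thesis .
  qed
  also have "\<dots> = (\<Sum>b\<in>UNIV. \<Sum>c\<in>UNIV. \<Sum>a\<in>UNIV. (\<Sum>k\<in>UNIV. E k a * F k b c)\<^sup>2)"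
    by (simp add: C2p[OF g] power2_eq_square)
  also have "\<dots> = (\<Sum>a\<in>UNIV. \<Sum>b\<in>UNIV. \<Sum>c\<in>UNIV. (\<Sum>k\<in>UNIV. E k a * F k b c)\<^sup>2)"
  proof -
    let ?f = "\<lambda>a b c. (\<Sum>k\<in>UNIV. E k a * F k b c)\<^sup>2"
    have "(\<Sum>b\<in>UNIV. \<Sum>c\<in>UNIV. \<Sum>a\<in>UNIV. ?f a b c) = (\<Sum>b\<in>UNIV. \<Sum>a\<in>UNIV. \<Sum>c\<in>UNIV. ?f a b c)"
      by (rule sum.cong[OF refl], rule sum.swap)
    also have "\<dots> = (\<Sum>a\<in>UNIV. \<Sum>b\<in>UNIV. \<Sum>c\<in>UNIV. ?f a b c)" by (rule sum.swap)
    finally show ?thesis .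
  qed
  also have "\<dots> = (\<Sum>a\<in>UNIV. \<Sum>b\<in>UNIV. \<Sum>c\<in>UNIV. (hat3 E S a b c)\<^sup>2)"
    by (simp add: hat3_def F_def hat2_def sum_distrib_left mult_ac)
  finally show ?thesis .
qed


lemma inner_mv:
  fixes M :: "real^'n::finite^'n" and u v :: "real^'n"
  shows "u \<bullet> (M *v v) = (\<Sum>i\<in>UNIV. \<Sum>j\<in>UNIV. u$i * v$j * M$i$j)"
  by (simp add: inner_vec_def matrix_vector_mult_def sum_distrib_left mult_ac)

lemma hat2_lin: "hat2 E (\<lambda>i j. P i j - c * Q i j) a b = hat2 E P a b - c * hat2 E Q a b"
  by (simp add: hat2_def algebra_simps sum_subtractf sum_distrib_left)

lemma hat3_sym1:
  assumes "\<And>a b c. S a b c = S b a c"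
  shows "hat3 E S b a c = hat3 E S a b c"
proof -
  have "hat3 E S b a c = (\<Sum>k\<in>UNIV. \<Sum>i\<in>UNIV. \<Sum>j\<in>UNIV. E k b * E i a * E j c * S k i j)"
    by (simp add: hat3_def)
  also have "\<dots> = (\<Sum>i\<in>UNIV. \<Sum>k\<in>UNIV. \<Sum>j\<in>UNIV. E k b * E i a * E j c * S k i j)"
    by (rule sum.swap)
  also have "\<dots> = hat3 E S a b c"
    unfolding hat3_def by (intro sum.cong refl) (subst assms, simp add: mult_ac)
  finally show ?thesis .
qed

lemma hat3_sym2:
  assumes "\<And>a b c. S a b c = S a c b"
  shows "hat3 E S a c b = hat3 E S a b c"
proof -
  have "hat3 E S a c b = (\<Sum>k\<in>UNIV. \<Sum>i\<in>UNIV. \<Sum>j\<in>UNIV. E k a * E i c * E j b * S k i j)"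
    by (simp add: hat3_def)
  also have "\<dots> = (\<Sum>k\<in>UNIV. \<Sum>j\<in>UNIV. \<Sum>i\<in>UNIV. E k a * E i c * E j b * S k i j)"
    by (rule sum.cong[OF refl], rule sum.swap)
  also have "\<dots> = hat3 E S a b c"
    unfolding hat3_def by (intro sum.cong refl) (subst assms, simp add: mult_ac)
  finally show ?thesis .
qed

lemma frame_Gi:
  fixes G Gi :: "real^'n::finite^'n" and e :: "'n \<Rightarrow> real^'n"
  assumes GGi: "G ** Gi = mat 1"
    and orth: "\<And>a b. e a \<bullet> (G *v e b) = (if a = b then 1 else 0)"
  shows "Gi$i$j = (\<Sum>a\<in>UNIV. e a $ i * e a $ j)"
proof -
  define EM :: "real^'n^'n" where "EM = (\<chi> i a. e a $ i)"
  have "transpose EM ** G ** EM = mat 1"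
  proof -
    have "(transpose EM ** G ** EM) $ a $ b = e a \<bullet> (G *v e b)" for a b
      by (simp add: EM_def matrix_matrix_mult_def transpose_def inner_mv sum_distrib_left mult_ac)
         (subst sum.swap, simp add: mult_ac)
    then show ?thesis by (simp add: vec_eq_iff orth mat_def)
  qed
  then have "(transpose EM ** G) ** EM = mat 1" by (simp add: matrix_mul_assoc)
  then have "EM ** (transpose EM ** G) = mat 1" using matrix_left_right_inverse by blast
  then have L: "(EM ** transpose EM) ** G = mat 1" by (simp add: matrix_mul_assoc)
  have "EM ** transpose EM = (EM ** transpose EM) ** (G ** Gi)" by (simp add: GGi)
  also have "\<dots> = Gi" by (metis L matrix_mul_assoc matrix_mul_lid)
  finally have "Gi = EM ** transpose EM" by simp
  then show ?thesis by (simp add: EM_def matrix_matrix_mult_def transpose_def)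
qed

lemma frame_reduction:
  fixes G Gi h :: "real^'n::finite^'n" and S T :: "'n \<Rightarrow> 'n \<Rightarrow> 'n \<Rightarrow> real"
    and dH dN :: "'n \<Rightarrow> real" and H N :: real and hc :: "'n \<Rightarrow> 'n \<Rightarrow> real"
    and e :: "'n \<Rightarrow> real^'n" and lam :: "'n \<Rightarrow> real"
  defines "n \<equiv> real CARD('n)"
  assumes GGi: "Gi ** G = mat 1" "G ** Gi = mat 1"
    and hsym: "\<And>i j. h$i$j = h$j$i"
    and Hdef: "H = (\<Sum>i\<in>UNIV. \<Sum>j\<in>UNIV. Gi$i$j * h$i$j)"
    and dHdef: "\<And>k. dH k = (\<Sum>i\<in>UNIV. \<Sum>j\<in>UNIV. Gi$i$j * S k i j)"
    and hcdef: "\<And>i j. hc i j = h$i$j - H / n * G$i$j"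
    and Tdef: "\<And>k i j. T k i j = S k i j - dH k / n * G$i$j"
    and Ndef: "N = sqrt (\<Sum>i\<in>UNIV. \<Sum>i'\<in>UNIV. \<Sum>j\<in>UNIV. \<Sum>j'\<in>UNIV. Gi$i$i' * Gi$j$j' * hc i j * hc i' j')"
    and N0: "N \<noteq> 0"
    and dNdef: "\<And>k. dN k = (\<Sum>i\<in>UNIV. \<Sum>i'\<in>UNIV. \<Sum>j\<in>UNIV. \<Sum>j'\<in>UNIV. Gi$i$i' * Gi$j$j' * T k i j * hc i' j') / N"
    and S1: "\<And>a b c. S a b c = S b a c" and S2: "\<And>a b c. S a b c = S a c b"
    and orth: "\<And>a b. e a \<bullet> (G *v e b) = (if a = b then 1 else 0)"
    and princ: "\<And>a. (\<chi> j i. \<Sum>k\<in>UNIV. Gi$j$k * h$i$k) *v e a = lam a *\<^sub>R e a"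
    and hyp: "(\<Sum>a\<in>UNIV. (\<Sum>k\<in>UNIV. \<Sum>i\<in>UNIV. \<Sum>j\<in>UNIV. e a $ k * e a $ i * e a $ j * S k i j) * (\<Sum>k\<in>UNIV. e a $ k * dH k))
       \<le> (n + 1) / (2 * n) * (\<Sum>i\<in>UNIV. \<Sum>j\<in>UNIV. Gi$i$j * dH i * dH j)"
  shows "(1 + 1 / n) * (\<Sum>i\<in>UNIV. \<Sum>j\<in>UNIV. Gi$i$j * dN i * dN j)
     \<le> (\<Sum>k\<in>UNIV. \<Sum>k'\<in>UNIV. \<Sum>i\<in>UNIV. \<Sum>i'\<in>UNIV. \<Sum>j\<in>UNIV. \<Sum>j'\<in>UNIV.
      Gi$k$k' * Gi$i$i' * Gi$j$j' * T k i j * T k' i' j')"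
proof -
  define E where "E i a = e a $ i" for i a
  define g where "g i j = Gi$i$j" for i j
  have g: "g i j = (\<Sum>a\<in>UNIV. E i a * E j a)" for i j
    unfolding g_def E_def by (rule frame_Gi[OF GGi(2) orth])
  have npos: "n > 0" unfolding n_def by simp
  have inE: "u \<bullet> (M *v v) = (\<Sum>i\<in>UNIV. \<Sum>j\<in>UNIV. u$i * v$j * M$i$j)" for u v and M :: "real^'n^'n"
    by (rule inner_mv)
  have hatG: "hat2 E (\<lambda>i j. G$i$j) a b = (if a = b then 1 else 0)" for a b
    using orth[of a b] by (simp add: hat2_def inE E_def)
  have hv: "h *v e a = lam a *\<^sub>R (G *v e a)" for a
  proof -
    have "(\<chi> j i. \<Sum>k\<in>UNIV. Gi$j$k * h$i$k) = Gi ** h"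
      by (simp add: vec_eq_iff matrix_matrix_mult_def hsym)
    then have "Gi *v (h *v e a) = lam a *\<^sub>R e a"
      using princ[of a] by (simp add: matrix_vector_mul_assoc)
    then have "G *v (Gi *v (h *v e a)) = G *v (lam a *\<^sub>R e a)" by simp
    then show ?thesis by (metis GGi(2) matrix_mul_assoc matrix_mul_lid matrix_vector_mul_assoc matrix_vector_mult_scaleR)
  qed
  have hath: "hat2 E (\<lambda>i j. h$i$j) a b = (if a = b then lam a else 0)" for a b
  proof -
    have "hat2 E (\<lambda>i j. h$i$j) a b = e a \<bullet> (h *v e b)" by (simp add: hat2_def inE E_def)
    also have "\<dots> = lam b * (e a \<bullet> (G *v e b))" by (simp add: hv)
    finally show ?thesis using orth[of a b] by simp
  qed
  have Hsum: "H = (\<Sum>a\<in>UNIV. lam a)"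
  proof -
    have "H = (\<Sum>i\<in>UNIV. \<Sum>j\<in>UNIV. g i j * h$i$j)" by (simp add: Hdef g_def)
    also have "\<dots> = (\<Sum>a\<in>UNIV. hat2 E (\<lambda>i j. h$i$j) a a)" by (simp add: C1[OF g] hat2_def)
    finally show ?thesis by (simp add: hath)
  qed
  define \<mu> where "\<mu> a = lam a - H / n" for a
  have hathc: "hat2 E hc a b = (if a = b then \<mu> a else 0)" for a b
  proof -
    have "hc = (\<lambda>i j. h$i$j - H / n * G$i$j)" using hcdef by auto
    then have "hat2 E hc a b = hat2 E (\<lambda>i j. h$i$j) a b - H / n * hat2 E (\<lambda>i j. G$i$j) a b"
      using hat2_lin[of E "\<lambda>i j. h$i$j" "H / n" "\<lambda>i j. G$i$j" a b] by simp
    then show ?thesis by (simp add: hath hatG \<mu>_def)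
  qed
  have mu0: "(\<Sum>b\<in>UNIV. \<mu> b) = 0"
    using npos by (simp add: \<mu>_def sum_subtractf Hsum n_def)
  have Nsq: "(\<Sum>i\<in>UNIV. \<Sum>i'\<in>UNIV. \<Sum>j\<in>UNIV. \<Sum>j'\<in>UNIV. Gi$i$i' * Gi$j$j' * hc i j * hc i' j')
      = (\<Sum>b\<in>UNIV. (\<mu> b)\<^sup>2)"
  proof -
    have "(\<Sum>i\<in>UNIV. \<Sum>i'\<in>UNIV. \<Sum>j\<in>UNIV. \<Sum>j'\<in>UNIV. Gi$i$i' * Gi$j$j' * hc i j * hc i' j')
        = (\<Sum>a\<in>UNIV. \<Sum>b\<in>UNIV. hat2 E hc a b * hat2 E hc a b)"
      using C4[OF g, where P=hc and Q=hc] by (simp add: g_def)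
    also have "\<dots> = (\<Sum>b\<in>UNIV. (\<mu> b)\<^sup>2)"
    proof -
      have "(\<Sum>b\<in>UNIV. hat2 E hc a b * hat2 E hc a b) = (\<mu> a)\<^sup>2" for a
      proof -
        have "(\<Sum>b\<in>UNIV. hat2 E hc a b * hat2 E hc a b) = (\<Sum>b\<in>UNIV. if a = b then (\<mu> a)\<^sup>2 else 0)"
          by (rule sum.cong) (auto simp: hathc power2_eq_square)
        then show ?thesis by simp
      qed
      then show ?thesis by simp
    qed
    finally show ?thesis .
  qed
  have M2: "N\<^sup>2 = (\<Sum>b\<in>UNIV. (\<mu> b)\<^sup>2)"
    using Ndef Nsq by (simp add: sum_nonneg)
  have mupos: "(\<Sum>b\<in>UNIV. (\<mu> b)\<^sup>2) > 0"
  proof -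
    have "N\<^sup>2 > 0" using N0 by simp
    then show ?thesis using M2 by simp
  qed
  define Sh where "Sh = hat3 E S"
  define K where "K a = (\<Sum>k\<in>UNIV. E k a * dH k)" for a
  have Sh1: "Sh a b c = Sh b a c" for a b c unfolding Sh_def by (rule hat3_sym1[symmetric], rule S1)
  have Sh2: "Sh a b c = Sh a c b" for a b c unfolding Sh_def by (rule hat3_sym2[symmetric], rule S2)
  have Kdef: "K a = (\<Sum>b\<in>UNIV. Sh a b b)" for a
  proof -
    have "K a = (\<Sum>k\<in>UNIV. E k a * (\<Sum>i\<in>UNIV. \<Sum>j\<in>UNIV. g i j * S k i j))"
      by (simp add: K_def dHdef g_def)
    also have "\<dots> = (\<Sum>k\<in>UNIV. E k a * (\<Sum>b\<in>UNIV. \<Sum>i\<in>UNIV. \<Sum>j\<in>UNIV. E i b * E j b * S k i j))"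
      by (simp add: C1[OF g])
    also have "\<dots> = (\<Sum>k\<in>UNIV. \<Sum>b\<in>UNIV. E k a * (\<Sum>i\<in>UNIV. \<Sum>j\<in>UNIV. E i b * E j b * S k i j))"
      by (simp add: sum_distrib_left)
    also have "\<dots> = (\<Sum>b\<in>UNIV. \<Sum>k\<in>UNIV. E k a * (\<Sum>i\<in>UNIV. \<Sum>j\<in>UNIV. E i b * E j b * S k i j))"
      by (rule sum.swap)
    also have "\<dots> = (\<Sum>b\<in>UNIV. Sh a b b)"
      by (simp add: Sh_def hat3_def sum_distrib_left mult_ac)
    finally show ?thesis .
  qed
  have hyp': "(\<Sum>a\<in>UNIV. Sh a a a * K a) \<le> (n + 1) / (2 * n) * (\<Sum>a\<in>UNIV. (K a)\<^sup>2)"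
  proof -
    have "(\<Sum>i\<in>UNIV. \<Sum>j\<in>UNIV. Gi$i$j * dH i * dH j) = (\<Sum>a\<in>UNIV. (K a)\<^sup>2)"
      using C2p[OF g, where u=dH and v=dH] by (simp add: g_def K_def power2_eq_square mult_ac)
    moreover have "(\<Sum>k\<in>UNIV. \<Sum>i\<in>UNIV. \<Sum>j\<in>UNIV. e a $ k * e a $ i * e a $ j * S k i j) = Sh a a a" for a
      by (simp add: Sh_def hat3_def E_def)
    moreover have "(\<Sum>k\<in>UNIV. e a $ k * dH k) = K a" for a by (simp add: K_def E_def)
    ultimately show ?thesis using hyp by simp
  qed
  have That: "hat3 E T a b c = Sh a b c - K a / n * (if b = c then 1 else 0)" for a b c
  proof -
    have "hat3 E T a b c = Sh a b c - (\<Sum>k\<in>UNIV. \<Sum>i\<in>UNIV. \<Sum>j\<in>UNIV. E k a * E i b * E j c * (dH k / n * G$i$j))"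
      by (simp add: hat3_def Tdef Sh_def algebra_simps sum_subtractf)
    also have "(\<Sum>k\<in>UNIV. \<Sum>i\<in>UNIV. \<Sum>j\<in>UNIV. E k a * E i b * E j c * (dH k / n * G$i$j))
       = K a / n * hat2 E (\<lambda>i j. G$i$j) b c"
    proof -
      have "(\<Sum>k\<in>UNIV. \<Sum>i\<in>UNIV. \<Sum>j\<in>UNIV. E k a * E i b * E j c * (dH k / n * G$i$j))
        = (\<Sum>k\<in>UNIV. (E k a * dH k / n) * (\<Sum>i\<in>UNIV. \<Sum>j\<in>UNIV. E i b * E j c * G$i$j))"
        by (rule sum.cong[OF refl]) (simp add: sum_distrib_left mult_ac)
      also have "\<dots> = K a / n * hat2 E (\<lambda>i j. G$i$j) b c"
        by (simp add: K_def hat2_def sum_divide_distrib[symmetric] sum_distrib_right[symmetric])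
      finally show ?thesis .
    qed
    finally show ?thesis by (simp add: hatG)
  qed
  have That': "hat3 E T a b c = Sh a b c - (if b = c then K a / n else 0)" for a b c
    by (simp add: That)
  have lhs: "(\<Sum>k\<in>UNIV. \<Sum>k'\<in>UNIV. \<Sum>i\<in>UNIV. \<Sum>i'\<in>UNIV. \<Sum>j\<in>UNIV. \<Sum>j'\<in>UNIV.
      Gi$k$k' * Gi$i$i' * Gi$j$j' * T k i j * T k' i' j')
     = (\<Sum>a\<in>UNIV. \<Sum>b\<in>UNIV. \<Sum>c\<in>UNIV. (Sh a b c - (if b = c then K a / n else 0))\<^sup>2)"
    using C6[OF g, where S=T] by (simp only: g_def That')
  have dNhat: "(\<Sum>k\<in>UNIV. E k a * dN k) = (\<Sum>b\<in>UNIV. (Sh a b b - K a / n) * \<mu> b) / N" for a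
  proof -
    have "(\<Sum>k\<in>UNIV. E k a * dN k) = (\<Sum>k\<in>UNIV. E k a * (\<Sum>b\<in>UNIV. \<Sum>c\<in>UNIV. hat2 E (T k) b c * hat2 E hc b c)) / N"
    proof -
      have dk: "dN k = (\<Sum>b\<in>UNIV. \<Sum>c\<in>UNIV. hat2 E (T k) b c * hat2 E hc b c) / N" for k
        using C4[OF g, where P="T k" and Q=hc] by (simp add: dNdef g_def)
      have "(\<Sum>k\<in>UNIV. E k a * dN k) = (\<Sum>k\<in>UNIV. E k a * (\<Sum>b\<in>UNIV. \<Sum>c\<in>UNIV. hat2 E (T k) b c * hat2 E hc b c) / N)"
        by (rule sum.cong[OF refl]) (simp only: dk times_divide_eq_right)
      then show ?thesis by (simp only: sum_divide_distrib)
    qed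
    also have "(\<Sum>k\<in>UNIV. E k a * (\<Sum>b\<in>UNIV. \<Sum>c\<in>UNIV. hat2 E (T k) b c * hat2 E hc b c))
       = (\<Sum>b\<in>UNIV. \<Sum>c\<in>UNIV. hat3 E T a b c * hat2 E hc b c)"
    proof -
      have "(\<Sum>k\<in>UNIV. E k a * (\<Sum>b\<in>UNIV. \<Sum>c\<in>UNIV. hat2 E (T k) b c * hat2 E hc b c))
         = (\<Sum>k\<in>UNIV. \<Sum>b\<in>UNIV. \<Sum>c\<in>UNIV. E k a * hat2 E (T k) b c * hat2 E hc b c)"
        by (simp add: sum_distrib_left mult_ac)
      also have "\<dots> = (\<Sum>b\<in>UNIV. \<Sum>k\<in>UNIV. \<Sum>c\<in>UNIV. E k a * hat2 E (T k) b c * hat2 E hc b c)"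
        by (rule sum.swap)
      also have "\<dots> = (\<Sum>b\<in>UNIV. \<Sum>c\<in>UNIV. \<Sum>k\<in>UNIV. E k a * hat2 E (T k) b c * hat2 E hc b c)"
        by (rule sum.cong[OF refl], rule sum.swap)
      also have "\<dots> = (\<Sum>b\<in>UNIV. \<Sum>c\<in>UNIV. hat3 E T a b c * hat2 E hc b c)"
        by (simp add: hat3_def hat2_def sum_distrib_left sum_distrib_right mult_ac)
      finally show ?thesis .
    qed
    also have "(\<Sum>b\<in>UNIV. \<Sum>c\<in>UNIV. hat3 E T a b c * hat2 E hc b c) = (\<Sum>b\<in>UNIV. (Sh a b b - K a / n) * \<mu> b)"
    proof -
      have "(\<Sum>c\<in>UNIV. hat3 E T a b c * hat2 E hc b c) = (Sh a b b - K a / n) * \<mu> b" for b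
      proof -
        have "(\<Sum>c\<in>UNIV. hat3 E T a b c * hat2 E hc b c) = (\<Sum>c\<in>UNIV. if b = c then (Sh a b b - K a / n) * \<mu> b else 0)"
          by (rule sum.cong) (auto simp: That hathc)
        then show ?thesis by simp
      qed
      then show ?thesis by simp
    qed
    finally show ?thesis .
  qed
  have rhs: "(\<Sum>i\<in>UNIV. \<Sum>j\<in>UNIV. Gi$i$j * dN i * dN j)
      = (\<Sum>a\<in>UNIV. (\<Sum>b\<in>UNIV. (Sh a b b - K a / n) * \<mu> b)\<^sup>2) / (\<Sum>b\<in>UNIV. (\<mu> b)\<^sup>2)"
  proof -
    have "(\<Sum>i\<in>UNIV. \<Sum>j\<in>UNIV. Gi$i$j * dN i * dN j) = (\<Sum>a\<in>UNIV. (\<Sum>k\<in>UNIV. E k a * dN k)\<^sup>2)"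
      using C2p[OF g, where u=dN and v=dN] by (simp add: g_def power2_eq_square mult_ac)
    also have "\<dots> = (\<Sum>a\<in>UNIV. (\<Sum>b\<in>UNIV. (Sh a b b - K a / n) * \<mu> b)\<^sup>2) / N\<^sup>2"
      by (simp only: dNhat power_divide sum_divide_distrib[symmetric])
    finally show ?thesis by (simp add: M2)
  qed
  show ?thesis unfolding lhs rhs n_def
    by (rule core_ineq[OF Sh1 Sh2 Kdef mu0 mupos hyp'[unfolded n_def]])
qed


lemma fd_works: "f differentiable (at x) \<Longrightarrow> (f has_derivative frechet_derivative f (at x)) (at x)"
  using frechet_derivative_works by blast

lemma pd_eq: "(f has_derivative f') (at x) \<Longrightarrow> pd i f x = f' (axis i 1)"
  unfolding pd_def using frechet_derivative_at by metis

lemma pd_cong_open: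
  assumes "open U" "x \<in> U" "\<And>y. y \<in> U \<Longrightarrow> f y = g y"
  shows "pd i f x = pd i g x"
proof -
  have "(\<lambda>f'. (f has_derivative f') (at x)) = (\<lambda>f'. (g has_derivative f') (at x))"
    using assms by (auto intro!: ext intro: has_derivative_transform_within_open[where s=U])
  then show ?thesis unfolding pd_def frechet_derivative_def by simp
qed

lemma pd_cong_open_fun:
  assumes "open U" "\<And>y. y \<in> U \<Longrightarrow> f y = g y"
  shows "\<forall>x\<in>U. pd i f x = pd i g x"
  using pd_cong_open assms by blast

lemma diff_cong_open:
  assumes "open U" "x \<in> U" "\<And>y. y \<in> U \<Longrightarrow> f y = g y" "f differentiable (at x)"
  shows "g differentiable (at x)"
  using assms unfolding differentiable_def
  by (auto intro: has_derivative_transform_within_open[where s=U])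

lemma pd_add: "f differentiable (at x) \<Longrightarrow> g differentiable (at x) \<Longrightarrow>
  pd i (\<lambda>y. f y + g y) x = pd i f x + pd i g x"
  by (rule trans[OF pd_eq[OF has_derivative_add[OF fd_works fd_works]]]) (simp_all add: pd_def)

lemma pd_diff: "f differentiable (at x) \<Longrightarrow> g differentiable (at x) \<Longrightarrow>
  pd i (\<lambda>y. f y - g y) x = pd i f x - pd i g x"
  by (rule trans[OF pd_eq[OF has_derivative_diff[OF fd_works fd_works]]]) (simp_all add: pd_def)

lemma pd_mult:
  fixes f g :: "real^'n::finite \<Rightarrow> real"
  shows "f differentiable (at x) \<Longrightarrow> g differentiable (at x) \<Longrightarrow>
  pd i (\<lambda>y. f y * g y) x = pd i f x * g x + f x * pd i g x"
  by (rule trans[OF pd_eq[OF has_derivative_mult[OF fd_works fd_works]]]) (simp_all add: pd_def)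

lemma pd_inner:
  fixes f g :: "real^'n::finite \<Rightarrow> real^'m::finite"
  shows "f differentiable (at x) \<Longrightarrow> g differentiable (at x) \<Longrightarrow>
  pd i (\<lambda>y. f y \<bullet> g y) x = pd i f x \<bullet> g x + f x \<bullet> pd i g x"
  by (rule trans[OF pd_eq[OF has_derivative_inner[OF fd_works fd_works]]]) (simp_all add: pd_def)

lemma pd_const: "pd i (\<lambda>y. c) x = 0"
  by (rule trans[OF pd_eq[OF has_derivative_const]]) simp

lemma pd_cmult:
  fixes f :: "real^'n::finite \<Rightarrow> real"
  shows "f differentiable (at x) \<Longrightarrow> pd i (\<lambda>y. c * f y) x = c * pd i f x"
  using pd_mult[of "\<lambda>y. c" x f i] by (simp add: pd_const)

lemma pd_sum:
  fixes f :: "'a \<Rightarrow> real^'n::finite \<Rightarrow> 'b::real_normed_vector"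
  assumes "finite A" "\<And>a. a \<in> A \<Longrightarrow> f a differentiable (at x)"
  shows "pd i (\<lambda>y. \<Sum>a\<in>A. f a y) x = (\<Sum>a\<in>A. pd i (f a) x)"
proof -
  have "((\<lambda>y. \<Sum>a\<in>A. f a y) has_derivative (\<lambda>v. \<Sum>a\<in>A. frechet_derivative (f a) (at x) v)) (at x)"
    using assms by (intro has_derivative_sum fd_works) auto
  from pd_eq[OF this, of i] show ?thesis by (simp add: pd_def)
qed

lemma pd_nth:
  fixes f :: "real^'n::finite \<Rightarrow> real^'m::finite"
  shows "f differentiable (at x) \<Longrightarrow> pd i (\<lambda>y. f y $ c) x = pd i f x $ c"
proof -
  assume "f differentiable (at x)"
  then have "((\<lambda>y. f y $ c) has_derivative (\<lambda>v. frechet_derivative f (at x) v $ c)) (at x)"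
    by (intro bounded_linear.has_derivative[OF bounded_linear_vec_nth] fd_works)
  from pd_eq[OF this, of i] show ?thesis by (simp add: pd_def)
qed

lemma diff_nth:
  fixes f :: "real^'n::finite \<Rightarrow> real^'m::finite"
  shows "f differentiable (at x) \<Longrightarrow> (\<lambda>y. f y $ c) differentiable (at x)"
  unfolding differentiable_def
  by (auto intro: bounded_linear.has_derivative[OF bounded_linear_vec_nth])

lemma diff_prod:
  fixes f :: "'a \<Rightarrow> real^'n::finite \<Rightarrow> real"
  assumes "\<And>a. a \<in> A \<Longrightarrow> f a differentiable (at x)"
  shows "(\<lambda>y. \<Prod>a\<in>A. f a y) differentiable (at x)"
proof -
  have "((\<lambda>y. \<Prod>a\<in>A. f a y) has_derivative
      (\<lambda>v. \<Sum>a\<in>A. frechet_derivative (f a) (at x) v * (\<Prod>j\<in>A - {a}. f j x))) (at x)"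
    using assms by (intro has_derivative_prod fd_works) auto
  then show ?thesis unfolding differentiable_def by blast
qed

lemma pd_sqrt:
  fixes f :: "real^'n::finite \<Rightarrow> real"
  assumes "f differentiable (at x)" "f x > 0"
  shows "pd i (\<lambda>y. sqrt (f y)) x = pd i f x / (2 * sqrt (f x))"
proof -
  have "((\<lambda>y. sqrt (f y)) has_derivative (\<lambda>v. inverse (sqrt (f x)) / 2 * frechet_derivative f (at x) v)) (at x)"
    using has_derivative_compose[OF fd_works[OF assms(1)] DERIV_real_sqrt[OF assms(2), unfolded has_field_derivative_def]]
    by simp
  from pd_eq[OF this, of i] show ?thesis by (simp add: pd_def divide_simps mult.commute)
qed

lemma diff_sqrt:
  fixes f :: "real^'n::finite \<Rightarrow> real"
  assumes "f differentiable (at x)" "f x > 0"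
  shows "(\<lambda>y. sqrt (f y)) differentiable (at x)"
  using has_derivative_compose[OF fd_works[OF assms(1)] DERIV_real_sqrt[OF assms(2), unfolded has_field_derivative_def]]
  unfolding differentiable_def by blast

lemma smooth_pd: "smooth_on U f \<Longrightarrow> smooth_on U (pd i f)"
  unfolding smooth_on_def by (metis Ck.simps(2))

lemma smooth_diff: "smooth_on U f \<Longrightarrow> open U \<Longrightarrow> y \<in> U \<Longrightarrow> f differentiable (at y)"
  unfolding smooth_on_def by (metis Ck.simps(2) differentiable_on_eq_differentiable_at)


lemma line_deriv:
  fixes f :: "real^'n::finite \<Rightarrow> real"
  assumes "f differentiable (at (p + s *\<^sub>R v))"
  shows "((\<lambda>s. f (p + s *\<^sub>R v)) has_real_derivative (frechet_derivative f (at (p + s *\<^sub>R v)) v)) (at s)"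
proof -
  have l: "((\<lambda>s. p + s *\<^sub>R v) has_derivative (\<lambda>h. h *\<^sub>R v)) (at s)"
    by (auto intro!: derivative_eq_intros)
  have fd: "(f has_derivative frechet_derivative f (at (p + s *\<^sub>R v))) (at (p + s *\<^sub>R v))"
    using assms by (rule fd_works)
  have lin: "linear (frechet_derivative f (at (p + s *\<^sub>R v)))"
    using fd has_derivative_linear by blast
  have "((\<lambda>s. f (p + s *\<^sub>R v)) has_derivative (\<lambda>h. frechet_derivative f (at (p + s *\<^sub>R v)) (h *\<^sub>R v))) (at s)"
    using has_derivative_compose[OF l fd] by simp
  moreover have "(\<lambda>h. frechet_derivative f (at (p + s *\<^sub>R v)) (h *\<^sub>R v)) = (\<lambda>h. frechet_derivative f (at (p + s *\<^sub>R v)) v * h)"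
    using lin by (auto simp: linear_scale mult.commute)
  ultimately show ?thesis by (simp add: has_field_derivative_def)
qed

lemma clairaut_half:
  fixes f :: "real^'n::finite \<Rightarrow> real"
  assumes diff: "\<And>y. y \<in> ball x d \<Longrightarrow> f differentiable (at y)"
    and L: "linear L"
    and est: "\<And>v. norm v < d \<Longrightarrow> \<bar>pd i f (x + v) - pd i f x - L v\<bar> \<le> \<epsilon> * norm v"
    and t: "0 < t" "2 * t < d" and ep: "\<epsilon> \<ge> 0"
  shows "\<bar>f (x + t *\<^sub>R axis j 1 + t *\<^sub>R axis i 1) - f (x + t *\<^sub>R axis j 1) - (f (x + t *\<^sub>R axis i 1) - f x)
      - t\<^sup>2 * L (axis j 1)\<bar> \<le> 3 * \<epsilon> * t\<^sup>2"
proof -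
  define ei :: "real^'n" where "ei = axis i 1"
  define ej :: "real^'n" where "ej = axis j 1"
  have nei: "norm ei = 1" and nej: "norm ej = 1" by (simp_all add: ei_def ej_def)
  define u where "u s = f (x + t *\<^sub>R ej + s *\<^sub>R ei) - f (x + s *\<^sub>R ei)" for s
  have inball: "x + c *\<^sub>R ej + s *\<^sub>R ei \<in> ball x d" if "0 \<le> s" "s \<le> t" "0 \<le> c" "c \<le> t" for s c
  proof -
    have "norm (c *\<^sub>R ej + s *\<^sub>R ei) \<le> c + s"
      using norm_triangle_ineq[of "c *\<^sub>R ej" "s *\<^sub>R ei"] that nei nej by simp
    moreover have "dist x (x + (c *\<^sub>R ej + s *\<^sub>R ei)) = norm (c *\<^sub>R ej + s *\<^sub>R ei)"
      by (metis add_diff_cancel_left' dist_commute dist_norm)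
    ultimately show ?thesis using that t by (simp add: add.assoc)
  qed
  have inball0: "x + s *\<^sub>R ei \<in> ball x d" if "0 \<le> s" "s \<le> t" for s
    using inball[OF that, of 0] t by simp
  have uder: "(u has_real_derivative (pd i f (x + t *\<^sub>R ej + s *\<^sub>R ei) - pd i f (x + s *\<^sub>R ei))) (at s)"
    if "0 \<le> s" "s \<le> t" for s
  proof -
    have d1: "f differentiable (at ((x + t *\<^sub>R ej) + s *\<^sub>R ei))" using diff inball[OF that, of t] t by simp
    have d2: "f differentiable (at (x + s *\<^sub>R ei))" using diff inball0[OF that] by simp
    show ?thesis unfolding u_def pd_def ei_def[symmetric]
      by (intro DERIV_diff line_deriv[OF d1] line_deriv[OF d2])
  qed
  obtain l \<xi> where \<xi>: "0 < \<xi>" "\<xi> < t" and dl: "(u has_real_derivative l) (at \<xi>)" and ul: "u t - u 0 = (t - 0) * l"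
  proof -
    have "continuous_on {0..t} u"
      by (intro continuous_at_imp_continuous_on ballI DERIV_isCont[OF uder]) auto
    moreover have "u differentiable (at s)" if "0 < s" "s < t" for s
      using uder[of s] that by (auto simp: real_differentiable_def)
    ultimately show ?thesis using MVT[OF t(1), of u] that by auto
  qed
  have l_eq: "l = pd i f (x + t *\<^sub>R ej + \<xi> *\<^sub>R ei) - pd i f (x + \<xi> *\<^sub>R ei)"
    using DERIV_unique[OF dl uder[of \<xi>]] \<xi> by simp
  define v1 where "v1 = t *\<^sub>R ej + \<xi> *\<^sub>R ei"
  define v2 where "v2 = \<xi> *\<^sub>R ei"
  have nv1: "norm v1 \<le> 2 * t"
    using norm_triangle_ineq[of "t *\<^sub>R ej" "\<xi> *\<^sub>R ei"] nei nej \<xi> t by (simp add: v1_def)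
  have nv2: "norm v2 \<le> t" using \<xi> nei by (simp add: v2_def)
  have e1: "\<bar>pd i f (x + v1) - pd i f x - L v1\<bar> \<le> \<epsilon> * norm v1" using nv1 t by (intro est) simp
  have e2: "\<bar>pd i f (x + v2) - pd i f x - L v2\<bar> \<le> \<epsilon> * norm v2" using nv2 t by (intro est) simp
  have Lv: "L v1 - L v2 = t * L ej"
    using L by (simp add: v1_def v2_def linear_add linear_scale)
  have "\<bar>l - t * L ej\<bar> \<le> \<epsilon> * norm v1 + \<epsilon> * norm v2"
  proof -
    have "l - t * L ej = (pd i f (x + v1) - pd i f x - L v1) - (pd i f (x + v2) - pd i f x - L v2)"
      using Lv by (simp add: l_eq v1_def v2_def add.assoc)
    then show ?thesis using e1 e2 by linarith
  qed
  also have "\<dots> \<le> \<epsilon> * (2 * t) + \<epsilon> * t"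
    using nv1 nv2 ep by (intro add_mono mult_left_mono) auto
  finally have lb: "\<bar>l - t * L ej\<bar> \<le> 3 * \<epsilon> * t" by simp
  have "f (x + t *\<^sub>R axis j 1 + t *\<^sub>R axis i 1) - f (x + t *\<^sub>R axis j 1) - (f (x + t *\<^sub>R axis i 1) - f x)
      - t\<^sup>2 * L (axis j 1) = t * (l - t * L ej)"
    using ul by (simp add: u_def ei_def ej_def power2_eq_square algebra_simps)
  also have "\<bar>\<dots>\<bar> \<le> t * (3 * \<epsilon> * t)" using lb t by (simp add: abs_mult mult_left_mono)
  finally show ?thesis by (simp add: power2_eq_square mult_ac)
qed

lemma abs2: "\<bar>(a::real) - p\<bar> \<le> c \<Longrightarrow> \<bar>a - q\<bar> \<le> c \<Longrightarrow> \<bar>p - q\<bar> \<le> 2 * c"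
  by linarith

lemma clairaut:
  fixes f :: "real^'n::finite \<Rightarrow> real"
  assumes U: "open U" "x \<in> U" and diff: "\<And>y. y \<in> U \<Longrightarrow> f differentiable (at y)"
    and di: "pd i f differentiable (at x)" and dj: "pd j f differentiable (at x)"
  shows "pd j (pd i f) x = pd i (pd j f) x"
proof -
  define Li where "Li = frechet_derivative (pd i f) (at x)"
  define Lj where "Lj = frechet_derivative (pd j f) (at x)"
  have hi: "(pd i f has_derivative Li) (at x)" using fd_works[OF di] Li_def by simp
  have hj: "(pd j f has_derivative Lj) (at x)" using fd_works[OF dj] Lj_def by simp
  have linLi: "linear Li" using hi has_derivative_linear by blast
  have linLj: "linear Lj" using hj has_derivative_linear by blast
  have "\<bar>Li (axis j 1) - Lj (axis i 1)\<bar> \<le> 6 * \<epsilon>" if ep: "\<epsilon> > 0" for \<epsilon>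
  proof -
    obtain d1 where d1: "d1 > 0" "\<And>y. norm (y - x) < d1 \<Longrightarrow> norm (pd i f y - pd i f x - Li (y - x)) \<le> \<epsilon> * norm (y - x)"
      using hi ep unfolding has_derivative_at_alt by blast
    obtain d2 where d2: "d2 > 0" "\<And>y. norm (y - x) < d2 \<Longrightarrow> norm (pd j f y - pd j f x - Lj (y - x)) \<le> \<epsilon> * norm (y - x)"
      using hj ep unfolding has_derivative_at_alt by blast
    obtain d3 where d3: "d3 > 0" "ball x d3 \<subseteq> U" using U open_contains_ball by blast
    define d where "d = min d1 (min d2 d3)"
    have dpos: "d > 0" using d1 d2 d3 by (simp add: d_def)
    define t where "t = d / 3"
    have t: "0 < t" "2 * t < d" using dpos by (simp_all add: t_def)
    have dif: "\<And>y. y \<in> ball x d \<Longrightarrow> f differentiable (at y)"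
      using d3 diff by (auto simp: d_def)
    have esti: "\<bar>pd i f (x + v) - pd i f x - Li v\<bar> \<le> \<epsilon> * norm v" if "norm v < d" for v
      using d1(2)[of "x + v"] that by (simp add: d_def)
    have estj: "\<bar>pd j f (x + v) - pd j f x - Lj v\<bar> \<le> \<epsilon> * norm v" if "norm v < d" for v
      using d2(2)[of "x + v"] that by (simp add: d_def)
    have A: "\<bar>f (x + t *\<^sub>R axis j 1 + t *\<^sub>R axis i 1) - f (x + t *\<^sub>R axis j 1) - (f (x + t *\<^sub>R axis i 1) - f x)
      - t\<^sup>2 * Li (axis j 1)\<bar> \<le> 3 * \<epsilon> * t\<^sup>2"
      by (rule clairaut_half[OF dif linLi esti t]) (use ep in auto)
    have B: "\<bar>f (x + t *\<^sub>R axis i 1 + t *\<^sub>R axis j 1) - f (x + t *\<^sub>R axis i 1) - (f (x + t *\<^sub>R axis j 1) - f x)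
      - t\<^sup>2 * Lj (axis i 1)\<bar> \<le> 3 * \<epsilon> * t\<^sup>2"
      by (rule clairaut_half[OF dif linLj estj t]) (use ep in auto)
    have sw: "x + t *\<^sub>R axis i 1 + t *\<^sub>R axis j 1 = x + t *\<^sub>R axis j 1 + t *\<^sub>R axis i 1" by (simp add: algebra_simps)
    have "\<bar>t\<^sup>2 * Li (axis j 1) - t\<^sup>2 * Lj (axis i 1)\<bar> \<le> 2 * (3 * \<epsilon> * t\<^sup>2)"
    proof -
      have eqa: "f (x + t *\<^sub>R axis j 1 + t *\<^sub>R axis i 1) - f (x + t *\<^sub>R axis i 1) - (f (x + t *\<^sub>R axis j 1) - f x)
        = f (x + t *\<^sub>R axis j 1 + t *\<^sub>R axis i 1) - f (x + t *\<^sub>R axis j 1) - (f (x + t *\<^sub>R axis i 1) - f x)"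
        by linarith
      show ?thesis using abs2[OF A B[unfolded sw eqa]] .
    qed
    then have "\<bar>t\<^sup>2 * (Li (axis j 1) - Lj (axis i 1))\<bar> \<le> 6 * \<epsilon> * t\<^sup>2"
      by (simp add: right_diff_distrib)
    then have "t\<^sup>2 * \<bar>Li (axis j 1) - Lj (axis i 1)\<bar> \<le> t\<^sup>2 * (6 * \<epsilon>)" by (simp add: abs_mult mult_ac)
    then show ?thesis using t by (simp add: mult_le_cancel_left)
  qed
  then have "\<bar>Li (axis j 1) - Lj (axis i 1)\<bar> \<le> 0"
  proof -
    assume H: "\<And>\<epsilon>. \<epsilon> > 0 \<Longrightarrow> \<bar>Li (axis j 1) - Lj (axis i 1)\<bar> \<le> 6 * \<epsilon>"
    show ?thesis
    proof (rule ccontr)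
      assume "\<not> ?thesis"
      then have p: "\<bar>Li (axis j 1) - Lj (axis i 1)\<bar> > 0" by simp
      have "\<bar>Li (axis j 1) - Lj (axis i 1)\<bar> \<le> 6 * (\<bar>Li (axis j 1) - Lj (axis i 1)\<bar> / 12)"
        using p by (intro H) simp
      then show False using p by simp
    qed
  qed
  then have "Li (axis j 1) = Lj (axis i 1)" by simp
  then show ?thesis by (simp add: pd_def Li_def Lj_def)
qed


lemma lin_expand:
  fixes D :: "real^'n::finite \<Rightarrow> real^'m::finite"
  assumes "linear D"
  shows "D v = (\<Sum>p\<in>UNIV. v$p *\<^sub>R D (axis p 1))"
proof -
  have "D v = D (\<Sum>p\<in>UNIV. v$p *\<^sub>R axis p 1)"
    using basis_expansion[of v] by (simp add: scalar_mult_eq_scaleR)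
  also have "\<dots> = (\<Sum>p\<in>UNIV. v$p *\<^sub>R D (axis p 1))"
    using assms by (simp add: linear_sum linear_scale)
  finally show ?thesis .
qed

lemma inv_props:
  fixes G :: "real^'n::finite^'n"
  assumes "det G \<noteq> 0"
  shows "G ** matrix_inv G = mat 1" "matrix_inv G ** G = mat 1"
proof -
  have "invertible G" using assms invertible_det_nz by blast
  then have "\<exists>A'. G ** A' = mat 1 \<and> A' ** G = mat 1" unfolding invertible_def .
  then have "G ** matrix_inv G = mat 1 \<and> matrix_inv G ** G = mat 1"
    unfolding matrix_inv_def by (rule someI_ex)
  then show "G ** matrix_inv G = mat 1" "matrix_inv G ** G = mat 1" by auto
qed

lemma inv_sym:
  fixes G Gi :: "real^'n::finite^'n"
  assumes "transpose G = G" "G ** Gi = mat 1" "Gi ** G = mat 1"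
  shows "transpose Gi = Gi"
proof -
  have "G ** transpose Gi = mat 1"
    using arg_cong[OF assms(3), of transpose] by (simp add: matrix_transpose_mul assms(1))
  then have "Gi ** (G ** transpose Gi) = Gi" by simp
  then show ?thesis by (simp add: matrix_mul_assoc assms(3))
qed

definition "Xp D p = D (axis p 1)"
definition "GG D = (\<chi> i j. Xp D i \<bullet> Xp D j)"

context
  fixes D :: "real^'n::finite \<Rightarrow> real^'m::finite" and nu :: "real^'m"
  assumes linD: "linear D" and injD: "inj D" and nu1: "norm nu = 1"
    and nuX: "\<And>p. nu \<bullet> D (axis p 1) = 0" and card: "CARD('m) = CARD('n) + 1"
begin


lemma GG_det: "det (GG D) \<noteq> 0"
proof -
  have Gv: "((GG D) *v v) $ i = Xp D i \<bullet> D v" for v i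
    by (simp add: GG_def matrix_vector_mult_def lin_expand[OF linD, of v] Xp_def inner_sum_right mult.commute)
  have "inj ((*v) (GG D))"
    unfolding linear_injective_0[OF matrix_vector_mul_linear]
  proof (intro allI impI)
    fix v assume "(GG D) *v v = 0"
    then have "\<forall>i. Xp D i \<bullet> D v = 0" using Gv by (metis vec_eq_iff zero_index)
    then have "D v \<bullet> D v = 0"
      by (subst (1) lin_expand[OF linD]) (simp add: inner_sum_left Xp_def)
    then have "D v = 0" by simp
    then show "v = 0" using injD linD by (metis linear_0 injD[unfolded inj_def])
  qed
  then show ?thesis using det_nz_iff_inj[OF matrix_vector_mul_linear, of "GG D"] by simp
qed

lemma span_orth_zero:
  assumes w1: "w \<bullet> nu = 0" and w2: "\<And>p. w \<bullet> Xp D p = 0"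
  shows "w = 0"
proof (rule ccontr)
  assume wn: "w \<noteq> 0"
  define B0 where "B0 = range (Xp D)"
  have B0: "B0 = D ` Basis"
  proof -
    have bas: "Basis = range (\<lambda>p::'n. axis p (1::real))"
      by (auto simp: Basis_vec_def)
    show ?thesis unfolding B0_def Xp_def bas by (rule image_image[symmetric])
  qed
  have indB0: "independent B0"
    unfolding B0 by (rule linear_independent_injective_image[OF linD independent_Basis]) (metis injD inj_on_subset subset_UNIV)
  have cB0: "card B0 = CARD('n)"
  proof -
    have "inj (Xp D)" using injD unfolding inj_def Xp_def by (metis axis_eq_axis one_neq_zero)
    then show ?thesis by (simp add: B0_def card_image)
  qed
  have orthspan: "\<And>v. v \<in> span S \<Longrightarrow> (\<And>y. y \<in> S \<Longrightarrow> a \<bullet> y = 0) \<Longrightarrow> a \<bullet> v = 0" for S a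
    using orthogonal_to_span unfolding orthogonal_def by blast
  have nuB0: "nu \<notin> span B0"
  proof
    assume "nu \<in> span B0"
    then have "nu \<bullet> nu = 0" by (rule orthspan) (auto simp: B0_def Xp_def nuX)
    then show False using nu1 by (simp add: norm_eq_sqrt_inner)
  qed
  have wB1: "w \<notin> span (insert nu B0)"
  proof
    assume "w \<in> span (insert nu B0)"
    then have "w \<bullet> w = 0" by (rule orthspan) (auto simp: B0_def w1 w2)
    then show False using wn by simp
  qed
  have ind: "independent (insert w (insert nu B0))"
    using indB0 nuB0 wB1 by (intro independent_insertI)
  have fin: "finite B0" by (simp add: B0_def)
  have "card (insert w (insert nu B0)) = CARD('n) + 2"
  proof -
    have a: "w \<notin> insert nu B0" using wB1 span_base by blast
    have b: "nu \<notin> B0" using nuB0 span_base by blast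
    show ?thesis using fin a b cB0 by (simp add: card_insert_disjoint)
  qed
  moreover have "card (insert w (insert nu B0)) \<le> DIM(real^'m)"
    using independent_bound[OF ind] by simp
  moreover have "DIM(real^'m) = CARD('m)" by simp
  ultimately show False using card by linarith
qed

lemma decomp:
  assumes GGi: "(GG D) ** Gi = mat 1" "Gi ** (GG D) = mat 1" and Gis: "transpose Gi = Gi"
    and w1: "w \<bullet> nu = 0"
  shows "w = (\<Sum>l\<in>UNIV. \<Sum>m\<in>UNIV. (Gi$l$m * (w \<bullet> Xp D m)) *\<^sub>R Xp D l)"
proof -
  define w' where "w' = w - (\<Sum>l\<in>UNIV. \<Sum>m\<in>UNIV. (Gi$l$m * (w \<bullet> Xp D m)) *\<^sub>R Xp D l)"
  have "w' \<bullet> nu = 0"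
  proof -
    have nuX': "D (axis p 1) \<bullet> nu = 0" for p using nuX[of p] inner_commute by metis
    show ?thesis by (simp add: w'_def inner_diff_left inner_sum_left Xp_def nuX' w1)
  qed
  moreover have "w' \<bullet> Xp D p = 0" for p
  proof -
    have "(\<Sum>l\<in>UNIV. \<Sum>m\<in>UNIV. Gi$l$m * (w \<bullet> Xp D m) * (Xp D l \<bullet> Xp D p))
        = (\<Sum>m\<in>UNIV. (w \<bullet> Xp D m) * (\<Sum>l\<in>UNIV. Gi$m$l * (GG D)$l$p))"
    proof -
      have "(\<Sum>l\<in>UNIV. \<Sum>m\<in>UNIV. Gi$l$m * (w \<bullet> Xp D m) * (Xp D l \<bullet> Xp D p))
          = (\<Sum>m\<in>UNIV. \<Sum>l\<in>UNIV. Gi$l$m * (w \<bullet> Xp D m) * (Xp D l \<bullet> Xp D p))"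
        by (rule sum.swap)
      also have "\<dots> = (\<Sum>m\<in>UNIV. (w \<bullet> Xp D m) * (\<Sum>l\<in>UNIV. Gi$m$l * (GG D)$l$p))"
      proof -
        have sy: "Gi$l$m = Gi$m$l" for l m
        proof -
          have "Gi$l$m = (transpose Gi)$l$m" using Gis by simp
          also have "\<dots> = Gi$m$l" by (simp add: transpose_def)
          finally show ?thesis .
        qed
        show ?thesis
          by (simp add: GG_def sum_distrib_left mult_ac) (intro sum.cong refl, metis sy)
      qed
      finally show ?thesis .
    qed
    also have "\<dots> = w \<bullet> Xp D p"
    proof -
      have "(\<Sum>l\<in>UNIV. Gi$m$l * (GG D)$l$p) = (if m = p then 1 else 0)" for m
      proof -
        have "(Gi ** (GG D))$m$p = (if m = p then 1 else 0)" using GGi(2) by (simp add: mat_def)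
        then show ?thesis by (simp add: matrix_matrix_mult_def)
      qed
      then have "(\<Sum>m\<in>UNIV. (w \<bullet> Xp D m) * (\<Sum>l\<in>UNIV. Gi$m$l * (GG D)$l$p)) = (\<Sum>m\<in>UNIV. if m = p then w \<bullet> Xp D m else 0)"
        by (intro sum.cong) auto
      then show ?thesis by simp
    qed
    finally show ?thesis by (simp add: w'_def inner_diff_left inner_sum_left)
  qed
  ultimately have "w' = 0" by (rule span_orth_zero)
  then show ?thesis by (simp add: w'_def)
qed

end


definition ipm :: "real^'n::finite^'n \<Rightarrow> real^'n^'n \<Rightarrow> real" where
  "ipm A B = (\<Sum>i\<in>UNIV. \<Sum>j\<in>UNIV. A$i$j * B$i$j)"

definition Qm :: "real^'n::finite^'n \<Rightarrow> real^'n^'n \<Rightarrow> real^'n^'n \<Rightarrow> real^'n^'n \<Rightarrow> real" where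
  "Qm A B P R = (\<Sum>i\<in>UNIV. \<Sum>i'\<in>UNIV. \<Sum>j\<in>UNIV. \<Sum>j'\<in>UNIV. A$i$i' * B$j$j' * P$i$j * R$i'$j')"

lemma trace_transpose': "trace (transpose A) = trace (A::real^'n::finite^'n)"
  by (simp add: trace_def transpose_def)

lemma ipm_trace: "ipm A B = trace (A ** transpose B)"
  by (simp add: ipm_def trace_def matrix_matrix_mult_def transpose_def)

lemma Qm_ipm: "Qm A B P R = ipm A (P ** B ** transpose R)"
proof -
  have "(\<Sum>j\<in>UNIV. \<Sum>j'\<in>UNIV. A$i$i' * B$j$j' * P$i$j * R$i'$j')
      = A$i$i' * (P ** B ** transpose R)$i$i'" for i i'
  proof -
    have "(\<Sum>j\<in>UNIV. \<Sum>j'\<in>UNIV. A$i$i' * B$j$j' * P$i$j * R$i'$j')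
        = (\<Sum>j'\<in>UNIV. \<Sum>j\<in>UNIV. A$i$i' * B$j$j' * P$i$j * R$i'$j')"
      by (rule sum.swap)
    also have "\<dots> = A$i$i' * (P ** B ** transpose R)$i$i'"
      by (simp add: matrix_matrix_mult_def transpose_def sum_distrib_left sum_distrib_right mult_ac)
    finally show ?thesis .
  qed
  then show ?thesis by (simp add: Qm_def ipm_def)
qed

lemma neg_mul: "(- A) ** (B::real^'n::finite^'n) = - (A ** B)"
  by (simp add: matrix_matrix_mult_def vec_eq_iff sum_negf)

lemma mul_neg: "A ** (- B::real^'n::finite^'n) = - (A ** B)"
  by (simp add: matrix_matrix_mult_def vec_eq_iff sum_negf)

lemma trace_neg: "trace (- A) = - trace (A::real^'n::finite^'n)"
  by (simp add: trace_def sum_negf)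

lemma mul_sub_l: "A ** (B - C) = A ** B - A ** (C::real^'n::finite^'n)"
  by (simp add: matrix_matrix_mult_def vec_eq_iff sum_subtractf algebra_simps)

lemma mul_sub_r: "(A - B) ** C = A ** C - B ** (C::real^'n::finite^'n)"
  by (simp add: matrix_matrix_mult_def vec_eq_iff sum_subtractf algebra_simps)

lemma mul_add_r: "(A + B) ** C = A ** C + B ** (C::real^'n::finite^'n)"
  by (simp add: matrix_matrix_mult_def vec_eq_iff sum.distrib algebra_simps)

lemma transpose_sub: "transpose (A - B) = transpose A - transpose (B::real^'n::finite^'n)"
  by (simp add: transpose_def vec_eq_iff)

lemma transpose_add': "transpose (A + B) = transpose A + transpose (B::real^'n::finite^'n)"
  by (simp add: transpose_def vec_eq_iff)

lemma transpose_neg: "transpose (- A) = - transpose (A::real^'n::finite^'n)"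
  by (simp add: transpose_def vec_eq_iff)

lemma ipm_sub: "ipm A (B - C) = ipm A B - ipm A C"
  by (simp add: ipm_def algebra_simps sum_subtractf)

lemma dGi_form:
  fixes G Gi dG dGi C :: "real^'n::finite^'n"
  assumes GGi: "Gi ** G = mat 1" "G ** Gi = mat 1"
    and dGi: "dGi = - (Gi ** dG ** Gi)" and dG: "dG = transpose C ** G + G ** C"
  shows "dGi = - (Gi ** transpose C + C ** Gi)"
proof -
  have "Gi ** dG ** Gi = Gi ** transpose C ** (G ** Gi) + (Gi ** G) ** C ** Gi"
    by (simp add: dG matrix_add_ldistrib mul_add_r matrix_mul_assoc)
  also have "\<dots> = Gi ** transpose C + C ** Gi" by (simp add: GGi)
  finally show ?thesis by (simp add: dGi)
qed

lemma deriv_trace: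
  fixes Gi h dh dGi C :: "real^'n::finite^'n"
  assumes hs: "transpose h = h"
    and dGi: "dGi = - (Gi ** transpose C + C ** Gi)"
  shows "ipm dGi h + ipm Gi dh = ipm Gi (dh - transpose C ** h - h ** C)"
proof -
  have "ipm dGi h = - trace (Gi ** transpose C ** h) - trace (C ** Gi ** h)"
    by (simp add: ipm_trace hs dGi neg_mul mul_add_r mul_sub_r trace_sub trace_add trace_neg)
  moreover have "ipm Gi (transpose C ** h) = trace (C ** Gi ** h)"
  proof -
    have "ipm Gi (transpose C ** h) = trace (Gi ** h ** C)"
      by (simp add: ipm_trace matrix_transpose_mul hs matrix_mul_assoc)
    also have "\<dots> = trace (C ** (Gi ** h))" by (rule trace_mul_sym)
    finally show ?thesis by (simp add: matrix_mul_assoc)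
  qed
  moreover have "ipm Gi (h ** C) = trace (Gi ** transpose C ** h)"
    by (simp add: ipm_trace matrix_transpose_mul hs matrix_mul_assoc)
  ultimately show ?thesis by (simp add: ipm_sub)
qed

lemma deriv_Q:
  fixes Gi T dT dGi C :: "real^'n::finite^'n"
  assumes Gs: "transpose Gi = Gi" and Ts: "transpose T = T" and dTs: "transpose dT = dT"
    and dGi: "dGi = - (Gi ** transpose C + C ** Gi)"
  shows "Qm dGi Gi T T + Qm Gi dGi T T + Qm Gi Gi dT T + Qm Gi Gi T dT
     = 2 * Qm Gi Gi (dT - transpose C ** T - T ** C) T"
proof -
  define Ct where "Ct = transpose C"
  have Cts: "transpose Ct = C" by (simp add: Ct_def)
  have dGis: "transpose dGi = dGi"
  proof -
    have "transpose dGi = - (transpose (Gi ** transpose C) + transpose (C ** Gi))"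
      by (simp only: dGi transpose_neg transpose_add')
    also have "\<dots> = - (C ** Gi + Gi ** transpose C)" by (simp add: matrix_transpose_mul Gs add.commute)
    finally show ?thesis by (simp add: dGi add.commute)
  qed
  have Qt: "Qm A B P R = trace (A ** (R ** transpose B ** transpose P))" for A B P R :: "real^'n^'n"
    by (simp add: Qm_ipm ipm_trace matrix_transpose_mul matrix_mul_assoc)
  define Z where "Z = trace (C ** Gi ** T ** Gi ** T)"
  have Z1: "trace (Gi ** Ct ** T ** Gi ** T) = Z"
  proof -
    have "trace (Gi ** Ct ** T ** Gi ** T) = trace (transpose (Gi ** Ct ** T ** Gi ** T))"
      by (simp add: trace_transpose')
    also have "transpose (Gi ** Ct ** T ** Gi ** T) = T ** Gi ** T ** C ** Gi"
      by (simp add: matrix_transpose_mul Gs Ts Cts matrix_mul_assoc)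
    also have "trace (T ** Gi ** T ** C ** Gi) = trace (Gi ** (T ** Gi ** T ** C))" by (rule trace_mul_sym)
    also have "\<dots> = trace ((Gi ** T ** Gi ** T) ** C)" by (simp add: matrix_mul_assoc)
    also have "\<dots> = trace (C ** (Gi ** T ** Gi ** T))" by (rule trace_mul_sym)
    finally show ?thesis by (simp add: Z_def matrix_mul_assoc)
  qed
  have Z2: "trace (Gi ** T ** C ** Gi ** T) = Z"
  proof -
    have "trace (Gi ** T ** C ** Gi ** T) = trace ((Gi ** T) ** (C ** Gi ** T))" by (simp add: matrix_mul_assoc)
    also have "\<dots> = trace ((C ** Gi ** T) ** (Gi ** T))" by (rule trace_mul_sym)
    finally show ?thesis by (simp add: Z_def matrix_mul_assoc)
  qed
  have Z3: "trace (Gi ** T ** Gi ** Ct ** T) = Z"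
  proof -
    have "trace (Gi ** T ** Gi ** Ct ** T) = trace ((Gi ** T ** Gi) ** (Ct ** T))" by (simp add: matrix_mul_assoc)
    also have "\<dots> = trace ((Ct ** T) ** (Gi ** T ** Gi))" by (rule trace_mul_sym)
    also have "\<dots> = trace (transpose ((Ct ** T) ** (Gi ** T ** Gi)))" by (simp add: trace_transpose')
    also have "transpose ((Ct ** T) ** (Gi ** T ** Gi)) = Gi ** T ** Gi ** T ** C"
      by (simp add: matrix_transpose_mul Gs Ts Cts matrix_mul_assoc)
    also have "trace (Gi ** T ** Gi ** T ** C) = trace (C ** (Gi ** T ** Gi ** T))" by (rule trace_mul_sym)
    finally show ?thesis by (simp add: Z_def matrix_mul_assoc)
  qed
  have W: "trace (Gi ** (dT ** Gi ** T)) = trace (Gi ** (T ** Gi ** dT))"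
  proof -
    have "trace (Gi ** (dT ** Gi ** T)) = trace ((Gi ** dT) ** (Gi ** T))" by (simp add: matrix_mul_assoc)
    also have "\<dots> = trace ((Gi ** T) ** (Gi ** dT))" by (rule trace_mul_sym)
    finally show ?thesis by (simp add: matrix_mul_assoc)
  qed
  have t1: "Qm dGi Gi T T = - trace (Gi ** Ct ** T ** Gi ** T) - Z"
    by (simp add: Qt Gs Ts Z_def Ct_def dGi neg_mul mul_add_r mul_sub_r trace_sub trace_add trace_neg matrix_mul_assoc)
  have t2: "Qm Gi dGi T T = - trace (Gi ** T ** Gi ** Ct ** T) - trace (Gi ** T ** C ** Gi ** T)"
    unfolding Qt Gs Ts dGis by (simp add: Ct_def dGi neg_mul mul_neg mul_add_r mul_sub_r mul_sub_l matrix_add_ldistrib trace_sub trace_add trace_neg matrix_mul_assoc)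
  have t34: "Qm Gi Gi dT T + Qm Gi Gi T dT = 2 * trace (Gi ** (T ** Gi ** dT))"
    using W by (simp add: Qt Gs Ts dTs)
  have r: "Qm Gi Gi (dT - transpose C ** T - T ** C) T
     = trace (Gi ** (T ** Gi ** dT)) - trace (Gi ** T ** Gi ** T ** C) - trace (Gi ** T ** Gi ** Ct ** T)"
    by (simp add: Qt Gs Ts dTs Ct_def transpose_sub matrix_transpose_mul mul_sub_l trace_sub matrix_mul_assoc)
  have Z4: "trace (Gi ** T ** Gi ** T ** C) = Z"
  proof -
    have "trace (Gi ** T ** Gi ** T ** C) = trace (C ** (Gi ** T ** Gi ** T))" by (rule trace_mul_sym)
    then show ?thesis by (simp add: Z_def matrix_mul_assoc)
  qed
  show ?thesis using t1 t2 t34 r Z1 Z2 Z3 Z4 by simp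
qed


lemma clairaut_vec:
  fixes f :: "real^'n::finite \<Rightarrow> real^'m::finite"
  assumes U: "open U" "x \<in> U" and diff: "\<And>y. y \<in> U \<Longrightarrow> f differentiable (at y)"
    and di: "\<And>y. y \<in> U \<Longrightarrow> pd i f differentiable (at y)"
    and dj: "\<And>y. y \<in> U \<Longrightarrow> pd j f differentiable (at y)"
  shows "pd j (pd i f) x = pd i (pd j f) x"
proof -
  have "pd j (pd i f) x $ c = pd i (pd j f) x $ c" for c
  proof -
    define fc where "fc y = f y $ c" for y
    have eqi: "pd i fc y = pd i f y $ c" if "y \<in> U" for y
      unfolding fc_def using pd_nth[OF diff[OF that]] .
    have eqj: "pd j fc y = pd j f y $ c" if "y \<in> U" for y
      unfolding fc_def using pd_nth[OF diff[OF that]] .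
    have dfc: "fc differentiable (at y)" if "y \<in> U" for y
      unfolding fc_def by (rule diff_nth[OF diff[OF that]])
    have dfi: "pd i fc differentiable (at x)"
      by (rule diff_cong_open[OF U(1,2), of "\<lambda>y. pd i f y $ c"]) (use eqi diff_nth[OF di[OF U(2)]] in auto)
    have dfj: "pd j fc differentiable (at x)"
      by (rule diff_cong_open[OF U(1,2), of "\<lambda>y. pd j f y $ c"]) (use eqj diff_nth[OF dj[OF U(2)]] in auto)
    have "pd j (pd i fc) x = pd i (pd j fc) x" by (rule clairaut[OF U dfc dfi dfj])
    moreover have "pd j (pd i fc) x = pd j (pd i f) x $ c"
    proof -
      have "pd j (pd i fc) x = pd j (\<lambda>y. pd i f y $ c) x" by (rule pd_cong_open[OF U]) (simp add: eqi)
      also have "\<dots> = pd j (pd i f) x $ c" by (rule pd_nth[OF di[OF U(2)]])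
      finally show ?thesis .
    qed
    moreover have "pd i (pd j fc) x = pd i (pd j f) x $ c"
    proof -
      have "pd i (pd j fc) x = pd i (\<lambda>y. pd j f y $ c) x" by (rule pd_cong_open[OF U]) (simp add: eqj)
      also have "\<dots> = pd i (pd j f) x $ c" by (rule pd_nth[OF dj[OF U(2)]])
      finally show ?thesis .
    qed
    ultimately show ?thesis by simp
  qed
  then show ?thesis by (simp add: vec_eq_iff)
qed

lemma diff_det:
  fixes F :: "real^'k::finite \<Rightarrow> real^'n::finite^'n"
  assumes "\<And>i j. (\<lambda>y. F y $ i $ j) differentiable (at x)"
  shows "(\<lambda>y. det (F y)) differentiable (at x)"
  unfolding det_def
  by (intro differentiable_sum ballI differentiable_mult differentiable_const diff_prod assms)
     (simp add: finite_permutations)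

locale patch =
  fixes U :: "(real^'n::finite) set" and X \<nu> :: "real^'n \<Rightarrow> real^'m::finite"
  assumes hp: "hypersurface_patch U X \<nu>"
begin

lemma openU: "open U" and cardm: "CARD('m) = CARD('n) + 1"
  and smX: "smooth_on U X" and smN: "smooth_on U \<nu>"
  and Xinj: "\<And>y. y \<in> U \<Longrightarrow> inj (frechet_derivative X (at y))"
  and nu1: "\<And>y. y \<in> U \<Longrightarrow> norm (\<nu> y) = 1"
  and nuX: "\<And>y i. y \<in> U \<Longrightarrow> \<nu> y \<bullet> pd i X y = 0"
  using hp unfolding hypersurface_patch_def by auto

lemma dX: "y \<in> U \<Longrightarrow> X differentiable (at y)" by (rule smooth_diff[OF smX openU])
lemma dXi: "y \<in> U \<Longrightarrow> pd i X differentiable (at y)" by (rule smooth_diff[OF smooth_pd[OF smX] openU])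
lemma dXij: "y \<in> U \<Longrightarrow> pd i (pd j X) differentiable (at y)"
  by (rule smooth_diff[OF smooth_pd[OF smooth_pd[OF smX]] openU])
lemma dXijk: "y \<in> U \<Longrightarrow> pd k (pd i (pd j X)) differentiable (at y)"
  by (rule smooth_diff[OF smooth_pd[OF smooth_pd[OF smooth_pd[OF smX]]] openU])
lemma dN: "y \<in> U \<Longrightarrow> \<nu> differentiable (at y)" by (rule smooth_diff[OF smN openU])
lemma dNi: "y \<in> U \<Longrightarrow> pd i \<nu> differentiable (at y)" by (rule smooth_diff[OF smooth_pd[OF smN] openU])

lemma XXsym: "y \<in> U \<Longrightarrow> pd i (pd j X) y = pd j (pd i X) y"
  by (rule clairaut_vec[OF openU _ dX dXi dXi])

lemma XXXsym: "y \<in> U \<Longrightarrow> pd k (pd i (pd j X)) y = pd i (pd k (pd j X)) y"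
  by (rule clairaut_vec[OF openU _ dXi dXij dXij])

lemma nuXd: "y \<in> U \<Longrightarrow> pd i \<nu> y \<bullet> pd p X y = - hh X \<nu> y $ i $ p"
proof -
  assume y: "y \<in> U"
  have "pd i (\<lambda>z. \<nu> z \<bullet> pd p X z) y = pd i (\<lambda>z. 0) y"
    by (rule pd_cong_open[OF openU y]) (simp add: nuX)
  then have "pd i \<nu> y \<bullet> pd p X y + \<nu> y \<bullet> pd i (pd p X) y = 0"
    by (simp add: pd_inner[OF dN[OF y] dXi[OF y]] pd_const)
  then show ?thesis by (simp add: hh_def inner_commute)
qed

lemma nunud: "y \<in> U \<Longrightarrow> pd i \<nu> y \<bullet> \<nu> y = 0"
proof -
  assume y: "y \<in> U"
  have "pd i (\<lambda>z. \<nu> z \<bullet> \<nu> z) y = pd i (\<lambda>z. 1) y"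
    by (rule pd_cong_open[OF openU y]) (simp add: nu1 dot_square_norm)
  then have "pd i \<nu> y \<bullet> \<nu> y + \<nu> y \<bullet> pd i \<nu> y = 0"
    by (simp add: pd_inner[OF dN[OF y] dN[OF y]] pd_const)
  then show ?thesis by (simp add: inner_commute)
qed

lemma hhsym: "y \<in> U \<Longrightarrow> hh X \<nu> y $ i $ j = hh X \<nu> y $ j $ i"
  by (simp add: hh_def XXsym)

lemma gmsym: "gm X y $ i $ j = gm X y $ j $ i"
  by (simp add: gm_def inner_commute)

lemma gm_GG: "y \<in> U \<Longrightarrow> gm X y = GG (frechet_derivative X (at y))"
  by (simp add: gm_def GG_def Xp_def pd_def)

lemma linD: "y \<in> U \<Longrightarrow> linear (frechet_derivative X (at y))"
  using fd_works[OF dX] has_derivative_linear by blast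

lemma nuXD: "y \<in> U \<Longrightarrow> \<nu> y \<bullet> frechet_derivative X (at y) (axis p 1) = 0"
  using nuX[of y p] by (simp add: pd_def)

lemma gm_det: "y \<in> U \<Longrightarrow> det (gm X y) \<noteq> 0"
  using GG_det[OF linD Xinj nu1 nuXD cardm] gm_GG by simp

lemma gm_inv: "y \<in> U \<Longrightarrow> gm X y ** ginv X y = mat 1" "y \<in> U \<Longrightarrow> ginv X y ** gm X y = mat 1"
  using inv_props[OF gm_det] by (simp_all add: ginv_def)

lemma gm_tr: "transpose (gm X y) = gm X y"
  by (simp add: transpose_def vec_eq_iff gmsym)

lemma ginv_tr: "y \<in> U \<Longrightarrow> transpose (ginv X y) = ginv X y"
  using inv_sym[OF gm_tr gm_inv(1) gm_inv(2)] by simp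

lemma ginv_sym: "y \<in> U \<Longrightarrow> ginv X y $ i $ j = ginv X y $ j $ i"
  using ginv_tr[of y] by (metis transpose_def vec_lambda_beta)

lemma meanH_eq: "y \<in> U \<Longrightarrow> meanH X \<nu> y = (\<Sum>i\<in>UNIV. \<Sum>j\<in>UNIV. ginv X y $ i $ j * hh X \<nu> y $ i $ j)"
  by (simp add: meanH_def shapeA_def nuXd hhsym sum_negf)

lemma shapeA_eq: "y \<in> U \<Longrightarrow> shapeA X \<nu> y = (\<chi> j i. \<Sum>k\<in>UNIV. ginv X y $ j $ k * hh X \<nu> y $ i $ k)"
  by (simp add: shapeA_def nuXd sum_negf)

end


context patch begin

definition "dG k x = (\<chi> i j. pd k (\<lambda>y. gm X y $ i $ j) x)"
definition "dGi k x = (\<chi> i j. pd k (\<lambda>y. ginv X y $ i $ j) x)"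
definition "dh k x = (\<chi> i j. pd k (\<lambda>y. hh X \<nu> y $ i $ j) x)"
definition "Cm k x = (\<chi> l i. christ X x l k i)"

lemma gm_fun: "(\<lambda>y. gm X y $ i $ j) = (\<lambda>y. pd i X y \<bullet> pd j X y)"
  by (simp add: gm_def)

lemma hh_fun: "(\<lambda>y. hh X \<nu> y $ i $ j) = (\<lambda>y. pd i (pd j X) y \<bullet> \<nu> y)"
  by (simp add: hh_def)

lemma dgm: "x \<in> U \<Longrightarrow> (\<lambda>y. gm X y $ i $ j) differentiable (at x)"
  unfolding gm_fun by (intro differentiable_inner dXi)

lemma pd_gm: "x \<in> U \<Longrightarrow> pd k (\<lambda>y. gm X y $ i $ j) x = pd k (pd i X) x \<bullet> pd j X x + pd i X x \<bullet> pd k (pd j X) x"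
  unfolding gm_fun by (rule pd_inner[OF dXi dXi])

lemma dhh: "x \<in> U \<Longrightarrow> (\<lambda>y. hh X \<nu> y $ i $ j) differentiable (at x)"
  unfolding hh_fun by (intro differentiable_inner dXij dN)

lemma pd_hh: "x \<in> U \<Longrightarrow> pd k (\<lambda>y. hh X \<nu> y $ i $ j) x = pd k (pd i (pd j X)) x \<bullet> \<nu> x + pd i (pd j X) x \<bullet> pd k \<nu> x"
  unfolding hh_fun by (rule pd_inner[OF dXij dN])

lemma ginv_cramer:
  assumes y: "y \<in> U"
  shows "ginv X y $ a $ b = det (\<chi> i l. if l = a then axis b 1 $ i else gm X y $ i $ l) / det (gm X y)"
proof -
  have "gm X y *v (ginv X y *v axis b 1) = axis b 1"
    by (simp add: matrix_vector_mul_assoc gm_inv[OF y])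
  then have "ginv X y *v axis b 1 = (\<chi> k. det (\<chi> i l. if l = k then axis b 1 $ i else gm X y $ i $ l) / det (gm X y))"
    using cramer[OF gm_det[OF y]] by blast
  then have "(ginv X y *v axis b 1) $ a = det (\<chi> i l. if l = a then axis b 1 $ i else gm X y $ i $ l) / det (gm X y)"
    by simp
  moreover have "(ginv X y *v axis b 1) $ a = ginv X y $ a $ b"
  proof -
    have "(ginv X y *v axis b 1) $ a = (\<Sum>j\<in>UNIV. ginv X y $ a $ j * (if j = b then 1 else 0))"
      by (simp add: matrix_vector_mult_def axis_def)
    also have "\<dots> = (\<Sum>j\<in>UNIV. if j = b then ginv X y $ a $ j else 0)"
      by (rule sum.cong) auto
    finally show ?thesis by simp
  qed
  ultimately show ?thesis by simp
qed

lemma dginv: "x \<in> U \<Longrightarrow> (\<lambda>y. ginv X y $ a $ b) differentiable (at x)"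
proof -
  assume x: "x \<in> U"
  have "(\<lambda>y. det (\<chi> i l. if l = a then axis b 1 $ i else gm X y $ i $ l) / det (gm X y)) differentiable (at x)"
  proof (intro differentiable_divide diff_det)
    fix i j
    show "(\<lambda>y. (\<chi> i l. if l = a then axis b 1 $ i else gm X y $ i $ l) $ i $ j) differentiable (at x)"
      using dgm[OF x] by (cases "j = a") simp_all
  next
    fix i j show "(\<lambda>y. gm X y $ i $ j) differentiable (at x)" by (rule dgm[OF x])
  next
    show "det (gm X x) \<noteq> 0" by (rule gm_det[OF x])
  qed
  then show ?thesis
    by (rule diff_cong_open[OF openU x, rotated]) (simp add: ginv_cramer)
qed

lemma dGi_eq: "x \<in> U \<Longrightarrow> dGi k x = - (ginv X x ** dG k x ** ginv X x)"
proof -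
  assume x: "x \<in> U"
  have id: "(\<Sum>b\<in>UNIV. ginv X y $ a $ b * gm X y $ b $ c) = (if a = c then 1 else 0)" if "y \<in> U" for y a c
  proof -
    have "(ginv X y ** gm X y) $ a $ c = (if a = c then 1 else 0)" using gm_inv(2)[OF that] by (simp add: mat_def)
    then show ?thesis by (simp add: matrix_matrix_mult_def)
  qed
  have "(dGi k x ** gm X x + ginv X x ** dG k x) $ a $ c = 0" for a c
  proof -
    have "pd k (\<lambda>y. \<Sum>b\<in>UNIV. ginv X y $ a $ b * gm X y $ b $ c) x = pd k (\<lambda>y. if a = c then 1 else 0) x"
      by (rule pd_cong_open[OF openU x]) (simp add: id)
    then have "(\<Sum>b\<in>UNIV. pd k (\<lambda>y. ginv X y $ a $ b * gm X y $ b $ c) x) = 0"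
      by (subst (asm) pd_sum) (auto intro!: differentiable_mult dginv[OF x] dgm[OF x] simp: pd_const)
    then have "(\<Sum>b\<in>UNIV. pd k (\<lambda>y. ginv X y $ a $ b) x * gm X x $ b $ c + ginv X x $ a $ b * pd k (\<lambda>y. gm X y $ b $ c) x) = 0"
      by (simp add: pd_mult[OF dginv[OF x] dgm[OF x]])
    then show ?thesis
      by (simp add: matrix_matrix_mult_def dGi_def dG_def sum.distrib)
  qed
  then have "dGi k x ** gm X x + ginv X x ** dG k x = 0" by (simp add: vec_eq_iff)
  then have e: "dGi k x ** gm X x = - (ginv X x ** dG k x)" by (simp add: eq_neg_iff_add_eq_0)
  have "dGi k x = dGi k x ** (gm X x ** ginv X x)" by (simp add: gm_inv[OF x])
  also have "\<dots> = (dGi k x ** gm X x) ** ginv X x" by (simp add: matrix_mul_assoc)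
  also have "\<dots> = - (ginv X x ** dG k x ** ginv X x)" by (simp add: e neg_mul)
  finally show ?thesis .
qed

lemma christ_eq: "x \<in> U \<Longrightarrow> christ X x l i j = (\<Sum>m\<in>UNIV. ginv X x $ l $ m * (pd i (pd j X) x \<bullet> pd m X x))"
proof -
  assume x: "x \<in> U"
  have "pd i (\<lambda>y. gm X y $ j $ m) x + pd j (\<lambda>y. gm X y $ i $ m) x - pd m (\<lambda>y. gm X y $ i $ j) x
     = 2 * (pd i (pd j X) x \<bullet> pd m X x)" for m
    by (simp add: pd_gm[OF x] XXsym[OF x, of i j] XXsym[OF x, of m i] XXsym[OF x, of m j] inner_commute)
  then show ?thesis by (simp add: christ_def sum_distrib_left)
qed

lemma dG_eq: "x \<in> U \<Longrightarrow> dG k x = transpose (Cm k x) ** gm X x + gm X x ** Cm k x"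
proof -
  assume x: "x \<in> U"
  have key: "(\<Sum>l\<in>UNIV. christ X x l k i * gm X x $ l $ j) = pd k (pd i X) x \<bullet> pd j X x" for i j
  proof -
    have "(\<Sum>l\<in>UNIV. christ X x l k i * gm X x $ l $ j)
       = (\<Sum>l\<in>UNIV. \<Sum>m\<in>UNIV. ginv X x $ m $ l * gm X x $ l $ j * (pd k (pd i X) x \<bullet> pd m X x))"
    proof -
      have c2: "christ X x l k i = (\<Sum>m\<in>UNIV. ginv X x $ m $ l * (pd k (pd i X) x \<bullet> pd m X x))" for l
        unfolding christ_eq[OF x] by (rule sum.cong) (simp_all add: ginv_sym[OF x, of l])
      show ?thesis by (simp add: c2 sum_distrib_right sum_distrib_left mult_ac)
    qed
    also have "\<dots> = (\<Sum>m\<in>UNIV. (\<Sum>l\<in>UNIV. ginv X x $ m $ l * gm X x $ l $ j) * (pd k (pd i X) x \<bullet> pd m X x))"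
      by (subst sum.swap) (simp add: sum_distrib_right)
    also have "\<dots> = (\<Sum>m\<in>UNIV. (if m = j then 1 else 0) * (pd k (pd i X) x \<bullet> pd m X x))"
    proof -
      have "(\<Sum>l\<in>UNIV. ginv X x $ m $ l * gm X x $ l $ j) = (if m = j then 1 else 0)" for m
      proof -
        have "(ginv X x ** gm X x) $ m $ j = (if m = j then 1 else 0)" using gm_inv(2)[OF x] by (simp add: mat_def)
        then show ?thesis by (simp add: matrix_matrix_mult_def)
      qed
      then show ?thesis by simp
    qed
    also have "\<dots> = pd k (pd i X) x \<bullet> pd j X x"
    proof -
      have "(\<Sum>m\<in>UNIV. (if m = j then 1 else 0) * (pd k (pd i X) x \<bullet> pd m X x))
          = (\<Sum>m\<in>UNIV. if m = j then pd k (pd i X) x \<bullet> pd m X x else 0)"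
        by (rule sum.cong) auto
      then show ?thesis by simp
    qed
    finally show ?thesis .
  qed
  have "dG k x $ i $ j = (transpose (Cm k x) ** gm X x + gm X x ** Cm k x) $ i $ j" for i j
  proof -
    have a: "(transpose (Cm k x) ** gm X x) $ i $ j = pd k (pd i X) x \<bullet> pd j X x"
      using key by (simp add: matrix_matrix_mult_def transpose_def Cm_def)
    have b: "(gm X x ** Cm k x) $ i $ j = pd i X x \<bullet> pd k (pd j X) x"
      using key[of j i] by (simp add: matrix_matrix_mult_def Cm_def gmsym[of x i] mult.commute inner_commute)
    show ?thesis using a b by (simp add: dG_def pd_gm[OF x])
  qed
  then show ?thesis by (simp add: vec_eq_iff)
qed

end


lemma pd_sum2:
  fixes f :: "'a::finite \<Rightarrow> 'b::finite \<Rightarrow> real^'n::finite \<Rightarrow> real"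
  assumes "\<And>a b. f a b differentiable (at x)"
  shows "pd k (\<lambda>y. \<Sum>a\<in>UNIV. \<Sum>b\<in>UNIV. f a b y) x = (\<Sum>a\<in>UNIV. \<Sum>b\<in>UNIV. pd k (f a b) x)"
proof -
  have "pd k (\<lambda>y. \<Sum>a\<in>UNIV. \<Sum>b\<in>UNIV. f a b y) x = (\<Sum>a\<in>UNIV. pd k (\<lambda>y. \<Sum>b\<in>UNIV. f a b y) x)"
    by (rule pd_sum) (auto intro!: differentiable_sum assms)
  also have "\<dots> = (\<Sum>a\<in>UNIV. \<Sum>b\<in>UNIV. pd k (f a b) x)"
    by (intro sum.cong refl pd_sum) (auto intro: assms)
  finally show ?thesis .
qed

lemma pd_sum4:
  fixes f :: "'a::finite \<Rightarrow> 'b::finite \<Rightarrow> 'c::finite \<Rightarrow> 'd::finite \<Rightarrow> real^'n::finite \<Rightarrow> real"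
  assumes "\<And>a b c d. f a b c d differentiable (at x)"
  shows "pd k (\<lambda>y. \<Sum>a\<in>UNIV. \<Sum>b\<in>UNIV. \<Sum>c\<in>UNIV. \<Sum>d\<in>UNIV. f a b c d y) x
     = (\<Sum>a\<in>UNIV. \<Sum>b\<in>UNIV. \<Sum>c\<in>UNIV. \<Sum>d\<in>UNIV. pd k (f a b c d) x)"
proof -
  have "pd k (\<lambda>y. \<Sum>a\<in>UNIV. \<Sum>b\<in>UNIV. \<Sum>c\<in>UNIV. \<Sum>d\<in>UNIV. f a b c d y) x
      = (\<Sum>a\<in>UNIV. \<Sum>b\<in>UNIV. pd k (\<lambda>y. \<Sum>c\<in>UNIV. \<Sum>d\<in>UNIV. f a b c d y) x)"
    by (rule pd_sum2) (auto intro!: differentiable_sum assms)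
  also have "\<dots> = (\<Sum>a\<in>UNIV. \<Sum>b\<in>UNIV. \<Sum>c\<in>UNIV. \<Sum>d\<in>UNIV. pd k (f a b c d) x)"
    by (intro sum.cong refl pd_sum2) (auto intro: assms)
  finally show ?thesis .
qed

context patch begin

lemma decomp_nu:
  assumes x: "x \<in> U"
  shows "pd i (pd j X) x \<bullet> pd k \<nu> x = - (\<Sum>m\<in>UNIV. hh X \<nu> x $ k $ m * christ X x m i j)"
proof -
  define D where "D = frechet_derivative X (at x)"
  have XpD: "Xp D m = pd m X x" for m by (simp add: Xp_def D_def pd_def)
  have GGD: "GG D = gm X x" using gm_GG[OF x] by (simp add: D_def)
  have w1: "pd k \<nu> x \<bullet> \<nu> x = 0" by (rule nunud[OF x])
  have dec: "pd k \<nu> x = (\<Sum>l\<in>UNIV. \<Sum>m\<in>UNIV. (ginv X x $ l $ m * (pd k \<nu> x \<bullet> Xp D m)) *\<^sub>R Xp D l)"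
    by (rule decomp[OF linD[OF x] Xinj[OF x] nu1[OF x] nuXD[OF x] cardm, folded D_def])
       (use gm_inv[OF x] ginv_tr[OF x] w1 GGD in simp_all)
  have "pd i (pd j X) x \<bullet> pd k \<nu> x
     = (\<Sum>l\<in>UNIV. \<Sum>m\<in>UNIV. ginv X x $ l $ m * (- hh X \<nu> x $ k $ m) * (pd i (pd j X) x \<bullet> pd l X x))"
    by (subst dec) (simp add: inner_sum_right XpD nuXd[OF x] mult_ac)
  also have "\<dots> = (\<Sum>m\<in>UNIV. \<Sum>l\<in>UNIV. ginv X x $ l $ m * (- hh X \<nu> x $ k $ m) * (pd i (pd j X) x \<bullet> pd l X x))"
    by (rule sum.swap)
  also have "\<dots> = - (\<Sum>m\<in>UNIV. hh X \<nu> x $ k $ m * christ X x m i j)"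
  proof -
    have "(\<Sum>l\<in>UNIV. ginv X x $ l $ m * (- hh X \<nu> x $ k $ m) * (pd i (pd j X) x \<bullet> pd l X x))
        = - (hh X \<nu> x $ k $ m * christ X x m i j)" for m
      by (simp add: christ_eq[OF x] sum_distrib_left ginv_sym[OF x, of m] mult_ac sum_negf)
    then show ?thesis by (simp add: sum_negf)
  qed
  finally show ?thesis .
qed

lemma christ_sym: "x \<in> U \<Longrightarrow> christ X x l i j = christ X x l j i"
  by (simp add: christ_eq XXsym)

lemma codazzi:
  assumes x: "x \<in> U"
  shows "cov2 X (hh X \<nu>) x k i j = cov2 X (hh X \<nu>) x i k j"
proof -
  have a: "pd k (\<lambda>y. hh X \<nu> y $ i $ j) x = pd k (pd i (pd j X)) x \<bullet> \<nu> x - (\<Sum>m\<in>UNIV. hh X \<nu> x $ k $ m * christ X x m i j)"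
    by (simp add: pd_hh[OF x] decomp_nu[OF x])
  have b: "pd i (\<lambda>y. hh X \<nu> y $ k $ j) x = pd i (pd k (pd j X)) x \<bullet> \<nu> x - (\<Sum>m\<in>UNIV. hh X \<nu> x $ i $ m * christ X x m k j)"
    by (simp add: pd_hh[OF x] decomp_nu[OF x])
  have c: "pd k (pd i (pd j X)) x = pd i (pd k (pd j X)) x" by (rule XXXsym[OF x])
  have d: "christ X x l k i = christ X x l i k" for l by (rule christ_sym[OF x])
  show ?thesis
    unfolding cov2_def a b c
    by (simp add: d algebra_simps)
qed

lemma cov2_sym:
  assumes x: "x \<in> U"
  shows "cov2 X (hh X \<nu>) x k i j = cov2 X (hh X \<nu>) x k j i"
proof -
  have "pd k (\<lambda>y. hh X \<nu> y $ i $ j) x = pd k (\<lambda>y. hh X \<nu> y $ j $ i) x"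
    by (rule pd_cong_open[OF openU x]) (simp add: hhsym)
  then show ?thesis
    unfolding cov2_def by (simp add: hhsym[OF x, of _ j] hhsym[OF x, of i] algebra_simps)
qed

lemma dmeanH: "x \<in> U \<Longrightarrow> meanH X \<nu> differentiable (at x)"
proof -
  assume x: "x \<in> U"
  have "(\<lambda>y. \<Sum>i\<in>UNIV. \<Sum>j\<in>UNIV. ginv X y $ i $ j * hh X \<nu> y $ i $ j) differentiable (at x)"
    by (intro differentiable_sum ballI differentiable_mult dginv[OF x] dhh[OF x]) auto
  then show ?thesis
    by (rule diff_cong_open[OF openU x, rotated]) (simp add: meanH_eq)
qed

lemma pd_meanH:
  assumes x: "x \<in> U"
  shows "pd k (meanH X \<nu>) x = (\<Sum>i\<in>UNIV. \<Sum>j\<in>UNIV. ginv X x $ i $ j * cov2 X (hh X \<nu>) x k i j)"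
proof -
  have "pd k (meanH X \<nu>) x = pd k (\<lambda>y. \<Sum>i\<in>UNIV. \<Sum>j\<in>UNIV. ginv X y $ i $ j * hh X \<nu> y $ i $ j) x"
    by (rule pd_cong_open[OF openU x]) (simp add: meanH_eq)
  also have "\<dots> = (\<Sum>i\<in>UNIV. \<Sum>j\<in>UNIV. pd k (\<lambda>y. ginv X y $ i $ j * hh X \<nu> y $ i $ j) x)"
    by (rule pd_sum2) (intro differentiable_mult dginv[OF x] dhh[OF x])
  also have "\<dots> = ipm (dGi k x) (hh X \<nu> x) + ipm (ginv X x) (dh k x)"
    by (simp add: pd_mult[OF dginv[OF x] dhh[OF x]] ipm_def dGi_def dh_def sum.distrib)
  also have "\<dots> = ipm (ginv X x) (dh k x - transpose (Cm k x) ** hh X \<nu> x - hh X \<nu> x ** Cm k x)"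
  proof (rule deriv_trace)
    show "transpose (hh X \<nu> x) = hh X \<nu> x" by (simp add: transpose_def vec_eq_iff hhsym[OF x])
    show "dGi k x = - (ginv X x ** transpose (Cm k x) + Cm k x ** ginv X x)"
      by (rule dGi_form[OF gm_inv(2)[OF x] gm_inv(1)[OF x] dGi_eq[OF x] dG_eq[OF x]])
  qed
  also have "\<dots> = (\<Sum>i\<in>UNIV. \<Sum>j\<in>UNIV. ginv X x $ i $ j * cov2 X (hh X \<nu>) x k i j)"
    by (simp add: ipm_def cov2_def dh_def Cm_def matrix_matrix_mult_def transpose_def mult.commute)
  finally show ?thesis .
qed

lemma hc_fun: "(\<lambda>y. hcirc X \<nu> y $ i $ j) = (\<lambda>y. hh X \<nu> y $ i $ j - (1 / real CARD('n)) * meanH X \<nu> y * gm X y $ i $ j)"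
  by (simp add: hcirc_def)

lemma dhc: "x \<in> U \<Longrightarrow> (\<lambda>y. hcirc X \<nu> y $ i $ j) differentiable (at x)"
  unfolding hc_fun by (intro differentiable_diff differentiable_mult differentiable_const dhh dmeanH dgm) auto

lemma pd_hc:
  assumes x: "x \<in> U"
  shows "pd k (\<lambda>y. hcirc X \<nu> y $ i $ j) x = pd k (\<lambda>y. hh X \<nu> y $ i $ j) x
     - (1 / real CARD('n)) * (pd k (meanH X \<nu>) x * gm X x $ i $ j + meanH X \<nu> x * pd k (\<lambda>y. gm X y $ i $ j) x)"
proof -
  have dm: "(\<lambda>y. (1 / real CARD('n)) * meanH X \<nu> y) differentiable (at x)"
    by (intro differentiable_mult differentiable_const dmeanH[OF x])
  have "pd k (\<lambda>y. hcirc X \<nu> y $ i $ j) x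
     = pd k (\<lambda>y. hh X \<nu> y $ i $ j) x - pd k (\<lambda>y. (1 / real CARD('n)) * meanH X \<nu> y * gm X y $ i $ j) x"
    unfolding hc_fun by (rule pd_diff[OF dhh[OF x]]) (intro differentiable_mult dm dgm[OF x])
  also have "pd k (\<lambda>y. (1 / real CARD('n)) * meanH X \<nu> y * gm X y $ i $ j) x
     = pd k (\<lambda>y. (1 / real CARD('n)) * meanH X \<nu> y) x * gm X x $ i $ j + (1 / real CARD('n)) * meanH X \<nu> x * pd k (\<lambda>y. gm X y $ i $ j) x"
    by (rule pd_mult[OF dm dgm[OF x]])
  also have "pd k (\<lambda>y. (1 / real CARD('n)) * meanH X \<nu> y) x = (1 / real CARD('n)) * pd k (meanH X \<nu>) x"
    by (rule pd_cmult[OF dmeanH[OF x]])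
  finally show ?thesis by (simp add: algebra_simps)
qed

lemma cov2_hc:
  assumes x: "x \<in> U"
  shows "cov2 X (hcirc X \<nu>) x k i j = cov2 X (hh X \<nu>) x k i j - pd k (meanH X \<nu>) x / real CARD('n) * gm X x $ i $ j"
proof -
  have dGij: "pd k (\<lambda>y. gm X y $ i $ j) x = (\<Sum>l\<in>UNIV. christ X x l k i * gm X x $ l $ j) + (\<Sum>l\<in>UNIV. christ X x l k j * gm X x $ i $ l)"
  proof -
    have "dG k x $ i $ j = (transpose (Cm k x) ** gm X x + gm X x ** Cm k x) $ i $ j" by (simp add: dG_eq[OF x])
    then show ?thesis by (simp add: dG_def matrix_matrix_mult_def transpose_def Cm_def mult.commute)
  qed
  show ?thesis
    unfolding cov2_def pd_hc[OF x]
    by (simp add: dGij hcirc_def algebra_simps sum_subtractf sum.distrib sum_distrib_left)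
qed

lemma hc_tr: "x \<in> U \<Longrightarrow> transpose (hcirc X \<nu> x) = hcirc X \<nu> x"
  by (simp add: transpose_def vec_eq_iff hcirc_def hhsym gmsym)

definition "tn y = tnorm2 X y (hcirc X \<nu> y)"

lemma dtn: "x \<in> U \<Longrightarrow> tn differentiable (at x)"
  unfolding tn_def[abs_def] tnorm2_def
  by (intro differentiable_sum ballI differentiable_mult dginv dhc) auto

lemma pd_tn:
  assumes x: "x \<in> U"
  shows "pd k tn x = 2 * (\<Sum>i\<in>UNIV. \<Sum>i'\<in>UNIV. \<Sum>j\<in>UNIV. \<Sum>j'\<in>UNIV.
      ginv X x $ i $ i' * ginv X x $ j $ j' * cov2 X (hcirc X \<nu>) x k i j * hcirc X \<nu> x $ i' $ j')"
proof -
  define T where "T = hcirc X \<nu> x"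
  define dT where "dT = (\<chi> i j. pd k (\<lambda>y. hcirc X \<nu> y $ i $ j) x)"
  define Gi where "Gi = ginv X x"
  have "pd k tn x = pd k (\<lambda>y. \<Sum>i\<in>UNIV. \<Sum>i'\<in>UNIV. \<Sum>j\<in>UNIV. \<Sum>j'\<in>UNIV.
      ginv X y $ i $ i' * ginv X y $ j $ j' * hcirc X \<nu> y $ i $ j * hcirc X \<nu> y $ i' $ j') x"
    by (simp add: tn_def[abs_def] tnorm2_def)
  also have "\<dots> = (\<Sum>i\<in>UNIV. \<Sum>i'\<in>UNIV. \<Sum>j\<in>UNIV. \<Sum>j'\<in>UNIV.
      pd k (\<lambda>y. ginv X y $ i $ i' * ginv X y $ j $ j' * hcirc X \<nu> y $ i $ j * hcirc X \<nu> y $ i' $ j') x)"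
    by (rule pd_sum4) (intro differentiable_mult dginv[OF x] dhc[OF x])
  also have "\<dots> = Qm (dGi k x) Gi T T + Qm Gi (dGi k x) T T + Qm Gi Gi dT T + Qm Gi Gi T dT"
    by (simp add: pd_mult differentiable_mult dginv[OF x] dhc[OF x] Qm_def dGi_def Gi_def T_def dT_def
        sum.distrib algebra_simps)
  also have "\<dots> = 2 * Qm Gi Gi (dT - transpose (Cm k x) ** T - T ** Cm k x) T"
  proof (rule deriv_Q)
    show "transpose Gi = Gi" unfolding Gi_def by (rule ginv_tr[OF x])
    show "transpose T = T" unfolding T_def by (rule hc_tr[OF x])
    show "transpose dT = dT"
    proof -
      have "pd k (\<lambda>y. hcirc X \<nu> y $ i $ j) x = pd k (\<lambda>y. hcirc X \<nu> y $ j $ i) x" for i j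
        by (rule pd_cong_open[OF openU x]) (simp add: hcirc_def hhsym gmsym)
      then show ?thesis by (simp add: dT_def transpose_def vec_eq_iff)
    qed
    show "dGi k x = - (Gi ** transpose (Cm k x) + Cm k x ** Gi)"
      unfolding Gi_def by (rule dGi_form[OF gm_inv(2)[OF x] gm_inv(1)[OF x] dGi_eq[OF x] dG_eq[OF x]])
  qed
  also have "\<dots> = 2 * (\<Sum>i\<in>UNIV. \<Sum>i'\<in>UNIV. \<Sum>j\<in>UNIV. \<Sum>j'\<in>UNIV.
      ginv X x $ i $ i' * ginv X x $ j $ j' * cov2 X (hcirc X \<nu>) x k i j * hcirc X \<nu> x $ i' $ j')"
    by (simp add: Qm_def cov2_def dT_def T_def Gi_def Cm_def matrix_matrix_mult_def transpose_def mult.commute)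
  finally show ?thesis .
qed

lemma pd_normA:
  assumes x: "x \<in> U" and pos: "tn x > 0"
  shows "pd k (normAcirc X \<nu>) x = (\<Sum>i\<in>UNIV. \<Sum>i'\<in>UNIV. \<Sum>j\<in>UNIV. \<Sum>j'\<in>UNIV.
      ginv X x $ i $ i' * ginv X x $ j $ j' * cov2 X (hcirc X \<nu>) x k i j * hcirc X \<nu> x $ i' $ j') / normAcirc X \<nu> x"
proof -
  have "normAcirc X \<nu> = (\<lambda>y. sqrt (tn y))" by (simp add: normAcirc_def tn_def fun_eq_iff)
  then have "pd k (normAcirc X \<nu>) x = pd k tn x / (2 * sqrt (tn x))"
    using pd_sqrt[OF dtn[OF x] pos] by simp
  then show ?thesis by (simp add: pd_tn[OF x] normAcirc_def tn_def)
qed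

end


theorem mainTheorem11:
  fixes U :: "(real^'n::finite) set"
    and X \<nu> :: "real^'n \<Rightarrow> real^'m::finite"
  assumes "hypersurface_patch U X \<nu>"
    and "\<forall>x\<in>U. \<exists>e::'n \<Rightarrow> real^'n. g_orthonormal X x e \<and> (\<forall>j. principal_vector X \<nu> x (e j)) \<and>
           (\<Sum>j\<in>UNIV. nabla_h_eee X \<nu> x (e j) * dir_deriv (e j) (meanH X \<nu>) x)
             \<le> (real CARD('n) + 1) / (2 * real CARD('n)) * gradnorm2 X (meanH X \<nu>) x"
  shows "\<forall>x\<in>U. normAcirc X \<nu> x \<noteq> 0 \<longrightarrow>
           t3norm2 X x (cov2 X (hcirc X \<nu>) x)
             \<ge> (1 + 1 / real CARD('n)) * gradnorm2 X (normAcirc X \<nu>) x"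
proof (intro ballI impI)
  interpret patch U X \<nu> by standard (rule assms(1))
  fix x assume x: "x \<in> U" and N0: "normAcirc X \<nu> x \<noteq> 0"
  obtain e :: "'n \<Rightarrow> real^'n" where orth: "g_orthonormal X x e" and pv: "\<forall>j. principal_vector X \<nu> x (e j)"
    and hyp: "(\<Sum>j\<in>UNIV. nabla_h_eee X \<nu> x (e j) * dir_deriv (e j) (meanH X \<nu>) x)
             \<le> (real CARD('n) + 1) / (2 * real CARD('n)) * gradnorm2 X (meanH X \<nu>) x"
    using assms(2) x by blast
  have "\<forall>j. \<exists>c. shapeA X \<nu> x *v e j = c *\<^sub>R e j" using pv by (auto simp: principal_vector_def)
  then obtain lam where lam: "\<And>j. shapeA X \<nu> x *v e j = lam j *\<^sub>R e j" by metis
  have orth': "\<And>a b. e a \<bullet> (gm X x *v e b) = (if a = b then 1 else 0)"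
    using orth by (simp add: g_orthonormal_def)
  have tnpos: "tn x > 0"
  proof -
    have g: "ginv X x $ i $ j = (\<Sum>a\<in>UNIV. e a $ i * e a $ j)" for i j
      by (rule frame_Gi[OF gm_inv(1)[OF x] orth'])
    have "tn x = (\<Sum>a\<in>UNIV. \<Sum>b\<in>UNIV. hat2 (\<lambda>i a. e a $ i) (\<lambda>i j. hcirc X \<nu> x $ i $ j) a b
                   * hat2 (\<lambda>i a. e a $ i) (\<lambda>i j. hcirc X \<nu> x $ i $ j) a b)"
      unfolding tn_def tnorm2_def
      using C4[where g="\<lambda>i j. ginv X x $ i $ j" and E="\<lambda>i a. e a $ i", OF g,
          of "\<lambda>i j. hcirc X \<nu> x $ i $ j" "\<lambda>i j. hcirc X \<nu> x $ i $ j"] by simp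
    then have "tn x \<ge> 0" by (simp add: sum_nonneg)
    moreover have "tn x \<noteq> 0" using N0 by (simp add: normAcirc_def tn_def)
    ultimately show ?thesis by simp
  qed
  have "(1 + 1 / real CARD('n)) * (\<Sum>i\<in>UNIV. \<Sum>j\<in>UNIV. ginv X x $ i $ j * pd i (normAcirc X \<nu>) x * pd j (normAcirc X \<nu>) x)
     \<le> (\<Sum>k\<in>UNIV. \<Sum>k'\<in>UNIV. \<Sum>i\<in>UNIV. \<Sum>i'\<in>UNIV. \<Sum>j\<in>UNIV. \<Sum>j'\<in>UNIV.
      ginv X x $ k $ k' * ginv X x $ i $ i' * ginv X x $ j $ j' * cov2 X (hcirc X \<nu>) x k i j * cov2 X (hcirc X \<nu>) x k' i' j')"
  proof (rule frame_reduction[where G="gm X x" and h="hh X \<nu> x" and S="cov2 X (hh X \<nu>) x"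
        and dH="\<lambda>k. pd k (meanH X \<nu>) x" and H="meanH X \<nu> x" and hc="\<lambda>i j. hcirc X \<nu> x $ i $ j"
        and N="normAcirc X \<nu> x" and e=e and lam=lam])
    show "ginv X x ** gm X x = mat 1" by (rule gm_inv(2)[OF x])
    show "gm X x ** ginv X x = mat 1" by (rule gm_inv(1)[OF x])
    show "\<And>i j. hh X \<nu> x $ i $ j = hh X \<nu> x $ j $ i" by (rule hhsym[OF x])
    show "meanH X \<nu> x = (\<Sum>i\<in>UNIV. \<Sum>j\<in>UNIV. ginv X x $ i $ j * hh X \<nu> x $ i $ j)" by (rule meanH_eq[OF x])
    show "\<And>k. pd k (meanH X \<nu>) x = (\<Sum>i\<in>UNIV. \<Sum>j\<in>UNIV. ginv X x $ i $ j * cov2 X (hh X \<nu>) x k i j)"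
      by (rule pd_meanH[OF x])
    show "\<And>i j. hcirc X \<nu> x $ i $ j = hh X \<nu> x $ i $ j - meanH X \<nu> x / real CARD('n) * gm X x $ i $ j"
      by (simp add: hcirc_def)
    show "\<And>k i j. cov2 X (hcirc X \<nu>) x k i j = cov2 X (hh X \<nu>) x k i j - pd k (meanH X \<nu>) x / real CARD('n) * gm X x $ i $ j"
      by (rule cov2_hc[OF x])
    show "normAcirc X \<nu> x = sqrt (\<Sum>i\<in>UNIV. \<Sum>i'\<in>UNIV. \<Sum>j\<in>UNIV. \<Sum>j'\<in>UNIV.
        ginv X x $ i $ i' * ginv X x $ j $ j' * hcirc X \<nu> x $ i $ j * hcirc X \<nu> x $ i' $ j')"
      by (simp add: normAcirc_def tnorm2_def)
    show "normAcirc X \<nu> x \<noteq> 0" by (rule N0)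
    show "\<And>k. pd k (normAcirc X \<nu>) x = (\<Sum>i\<in>UNIV. \<Sum>i'\<in>UNIV. \<Sum>j\<in>UNIV. \<Sum>j'\<in>UNIV.
        ginv X x $ i $ i' * ginv X x $ j $ j' * cov2 X (hcirc X \<nu>) x k i j * hcirc X \<nu> x $ i' $ j') / normAcirc X \<nu> x"
      by (rule pd_normA[OF x tnpos])
    show "\<And>a b c. cov2 X (hh X \<nu>) x a b c = cov2 X (hh X \<nu>) x b a c" by (rule codazzi[OF x])
    show "\<And>a b c. cov2 X (hh X \<nu>) x a b c = cov2 X (hh X \<nu>) x a c b" by (rule cov2_sym[OF x])
    show "\<And>a b. e a \<bullet> (gm X x *v e b) = (if a = b then 1 else 0)" by (rule orth')
    show "\<And>a. (\<chi> j i. \<Sum>k\<in>UNIV. ginv X x $ j $ k * hh X \<nu> x $ i $ k) *v e a = lam a *\<^sub>R e a"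
      using lam shapeA_eq[OF x] by simp
    show "(\<Sum>a\<in>UNIV. (\<Sum>k\<in>UNIV. \<Sum>i\<in>UNIV. \<Sum>j\<in>UNIV. e a $ k * e a $ i * e a $ j * cov2 X (hh X \<nu>) x k i j) *
          (\<Sum>k\<in>UNIV. e a $ k * pd k (meanH X \<nu>) x))
       \<le> (real CARD('n) + 1) / (2 * real CARD('n)) *
          (\<Sum>i\<in>UNIV. \<Sum>j\<in>UNIV. ginv X x $ i $ j * pd i (meanH X \<nu>) x * pd j (meanH X \<nu>) x)"
      using hyp by (simp add: nabla_h_eee_def dir_deriv_def gradnorm2_def)
  qed
  then show "t3norm2 X x (cov2 X (hcirc X \<nu>) x) \<ge> (1 + 1 / real CARD('n)) * gradnorm2 X (normAcirc X \<nu>) x"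
    by (simp add: t3norm2_def gradnorm2_def)
qed


end
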